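(* Let $A=KQ/I$ be a finite-dimensional gentle algebra, let $B$ be a minimal band for $A$ and let $q>1$ be an integer. Then $B^{\times q}\le_{\mathrm{deg}}B^q$, i.e. $\mathcal{O}_{\{B^q\}}\subseteq\overline{\mathcal{O}_{B^{\times q}}}$ in the module variety $\mathrm{mod}(A,\mathbf{d})$, where $\mathbf{d}$ is the common dimension vector, $B^q$ denotes the band given by the $q$-fold concatenation of $B$ (a multi-set with one element of multiplicity one), and $B^{\times q}$ denotes the multi-set consisting of $B$ with multiplicity $q$.
   Context: Letters are arrows $\alpha\in Q_1$ (direct) and formal inverses $\alpha^{-1}$ (inverse). A string is a reduced walk in $Q$ avoiding the relations of $I$ (and their inverses); a band is a closed walk $b_1\cdots b_m$ ($m\ge1$) all of whose powers are strings, up to rotation and inversion; it is minimal if it is not of the form $(B')^r$ with $r\ge2$. For a (not necessarily minimal) band $B$, $\lambda\in K^*$, $q\ge1$, the band module $M(B,\lambda,q)$ has a copy of $K^q$ at each vertex position of the closed walk, with arrows acting by identities along the letters except one fixed letter acting by the Jordan block $J(\lambda,q)$. $\mathrm{mod}(A,\mathbf{d})$ is the affine variety of representations of $(Q,I)$ with dimension vector $\mathbf{d}$, Zariski topology, base change action of $\mathrm{GL}_{\mathbf{d}}$. For a multi-set of pairwise distinct bands $B_j$ with multiplicities $q_j$ (plus possibly strings $C_i$), its family is the union of the orbits of all modules $\bigoplus_i M(C_i)\oplus\bigoplus_j\bigoplus_k M(B_j,\lambda_{jk},q_{jk})$ with $(q_{jk})_k$ a partition of $q_j$ and $\lambda_{jk}\in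 K^*$. In particular $\mathcal{O}_{\{B^q\}}$ is the union over $\lambda\in K^*$ of the orbits of $M(B^q,\lambda,1)$, and $\mathcal{O}_{B^{\times q}}$ is the union of the orbits of the modules $\bigoplus_k M(B,\lambda_k,q_k)$ with $\sum_k q_k=q$, $\lambda_k\in K^*$. Standing assumption: $K$ is an algebraically closed field. *)

theory Defs
  imports "HOL-Computational_Algebra.Polynomial"
begin

definition alg_closed :: "'k::field itself \<Rightarrow> bool" where
  "alg_closed _ \<longleftrightarrow> (\<forall>p :: 'k poly. degree p \<ge> 1 \<longrightarrow> (\<exists>x. poly p x = 0))"

text \<open>A pair (al, be) in R is the path of length two
  "al followed by be" (t al = s be); the ideal I is generated by R.\<close>

definition path_avoiding :: "('a \<Rightarrow> 'v) \<Rightarrow> ('a \<Rightarrow> 'v) \<Rightarrow> ('a \<times> 'a) set \<Rightarrow> 'a list \<Rightarrow> bool" where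
  "path_avoiding s t R p \<longleftrightarrow>
     (\<forall>i. Suc i < length p \<longrightarrow> t (p!i) = s (p!Suc i) \<and> (p!i, p!Suc i) \<notin> R)"

definition gentle :: "('a::finite \<Rightarrow> 'v::finite) \<Rightarrow> ('a \<Rightarrow> 'v) \<Rightarrow> ('a \<times> 'a) set \<Rightarrow> bool" where
  "gentle s t R \<longleftrightarrow>
     (\<forall>(al, be) \<in> R. t al = s be) \<and>
     (\<forall>v. card {al. s al = v} \<le> 2 \<and> card {al. t al = v} \<le> 2) \<and>
     (\<forall>be. card {al. t al = s be \<and> (al, be) \<notin> R} \<le> 1 \<and>
           card {ga. s ga = t be \<and> (be, ga) \<notin> R} \<le> 1) \<and>
     (\<forall>be. card {al. (al, be) \<in> R} \<le> 1 \<and> card {ga. (be, ga) \<in> R} \<le> 1) \<and>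
     \<comment> \<open>finite-dimensionality of KQ/I: paths avoiding R have bounded length\<close>
     (\<exists>N. \<forall>p. path_avoiding s t R p \<longrightarrow> length p \<le> N)"

datatype 'a letter = Dir 'a | Inv 'a

fun lsrc :: "('a \<Rightarrow> 'v) \<Rightarrow> ('a \<Rightarrow> 'v) \<Rightarrow> 'a letter \<Rightarrow> 'v" where
  "lsrc s t (Dir a) = s a"
| "lsrc s t (Inv a) = t a"

fun ltgt :: "('a \<Rightarrow> 'v) \<Rightarrow> ('a \<Rightarrow> 'v) \<Rightarrow> 'a letter \<Rightarrow> 'v" where
  "ltgt s t (Dir a) = t a"
| "ltgt s t (Inv a) = s a"

text \<open>Two consecutive letters x y (x first) are admissible in a string:
  they compose, the walk is reduced, and neither the pair nor its inverse is a relation.\<close>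
fun ok_pair :: "('a \<Rightarrow> 'v) \<Rightarrow> ('a \<Rightarrow> 'v) \<Rightarrow> ('a \<times> 'a) set \<Rightarrow> 'a letter \<Rightarrow> 'a letter \<Rightarrow> bool" where
  "ok_pair s t R (Dir a) (Dir b) \<longleftrightarrow> t a = s b \<and> (a, b) \<notin> R"
| "ok_pair s t R (Inv a) (Inv b) \<longleftrightarrow> s a = t b \<and> (b, a) \<notin> R"
| "ok_pair s t R (Dir a) (Inv b) \<longleftrightarrow> t a = t b \<and> a \<noteq> b"
| "ok_pair s t R (Inv a) (Dir b) \<longleftrightarrow> s a = s b \<and> a \<noteq> b"

definition is_string :: "('a \<Rightarrow> 'v) \<Rightarrow> ('a \<Rightarrow> 'v) \<Rightarrow> ('a \<times> 'a) set \<Rightarrow> 'a letter list \<Rightarrow> bool" where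
  "is_string s t R w \<longleftrightarrow> (\<forall>i. Suc i < length w \<longrightarrow> ok_pair s t R (w!i) (w!Suc i))"

definition is_band :: "('a \<Rightarrow> 'v) \<Rightarrow> ('a \<Rightarrow> 'v) \<Rightarrow> ('a \<times> 'a) set \<Rightarrow> 'a letter list \<Rightarrow> bool" where
  "is_band s t R B \<longleftrightarrow> B \<noteq> [] \<and> ltgt s t (last B) = lsrc s t (hd B) \<and>
     (\<forall>n\<ge>1. is_string s t R (concat (replicate n B)))"

definition minimal_band :: "('a \<Rightarrow> 'v) \<Rightarrow> ('a \<Rightarrow> 'v) \<Rightarrow> ('a \<times> 'a) set \<Rightarrow> 'a letter list \<Rightarrow> bool" where
  "minimal_band s t R B \<longleftrightarrow> is_band s t R B \<and>
     \<not> (\<exists>B' r. r \<ge> 2 \<and> B = concat (replicate r B'))"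

text \<open>A finite-dimensional representation is given by a finite basis E, a vertex
  for each basis vector, and for each arrow a the matrix act a e' e
  (coefficient of e' in a applied to e).\<close>


type_synonym ('e,'v,'a,'k) repr = "'e set \<times> ('e \<Rightarrow> 'v) \<times> ('a \<Rightarrow> 'e \<Rightarrow> 'e \<Rightarrow> 'k)"

definition rep_iso :: "('e1,'v,'a,'k::field) repr \<Rightarrow> ('e2,'v,'a,'k) repr \<Rightarrow> bool" where
  "rep_iso M N \<longleftrightarrow> (case M of (E1, vt1, a1) \<Rightarrow> case N of (E2, vt2, a2) \<Rightarrow>
     (\<exists>(\<phi> :: 'e2 \<Rightarrow> 'e1 \<Rightarrow> 'k) (\<psi> :: 'e1 \<Rightarrow> 'e2 \<Rightarrow> 'k).
        (\<forall>e2 e1. \<phi> e2 e1 \<noteq> 0 \<longrightarrow> e1 \<in> E1 \<and> e2 \<in> E2 \<and> vt1 e1 = vt2 e2) \<and>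
        (\<forall>e1 e2. \<psi> e1 e2 \<noteq> 0 \<longrightarrow> e1 \<in> E1 \<and> e2 \<in> E2 \<and> vt1 e1 = vt2 e2) \<and>
        (\<forall>e\<in>E2. \<forall>e'\<in>E2. (\<Sum>x\<in>E1. \<phi> e x * \<psi> x e') = (if e = e' then 1 else 0)) \<and>
        (\<forall>e\<in>E1. \<forall>e'\<in>E1. (\<Sum>x\<in>E2. \<psi> e x * \<phi> x e') = (if e = e' then 1 else 0)) \<and>
        (\<forall>al. \<forall>e2\<in>E2. \<forall>e1\<in>E1.
           (\<Sum>x\<in>E2. a2 al e2 x * \<phi> x e1) = (\<Sum>y\<in>E1. \<phi> e2 y * a1 al y e1))))"

definition dsum :: "('e,'v,'a,'k::field) repr list \<Rightarrow> (nat \<times> 'e,'v,'a,'k) repr" where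
  "dsum Ms = ({(k, e). k < length Ms \<and> e \<in> fst (Ms!k)},
              (\<lambda>(k, e). fst (snd (Ms!k)) e),
              (\<lambda>al (k', e') (k, e). if k = k' \<and> k < length Ms then snd (snd (Ms!k)) al e' e else 0))"

definition jordan :: "'k::field \<Rightarrow> nat \<Rightarrow> nat \<Rightarrow> 'k" where
  "jordan lam i j = (if i = j then lam else if j = Suc i then 1 else 0)"

text \<open>M(B, lam, q): basis (p, j), p a position of the closed walk B (p < length B),
  j < q; position p sits at the vertex lsrc (B!p); letter B!p joins position p
  to position (p+1) mod m; all letters act by identity, except letter 0
  which acts by the Jordan block J(lam, q).\<close>

definition band_module :: "('a \<Rightarrow> 'v) \<Rightarrow> ('a \<Rightarrow> 'v) \<Rightarrow> 'a letter list \<Rightarrow> 'k::field \<Rightarrow> nat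
     \<Rightarrow> (nat \<times> nat,'v,'a,'k) repr" where
  "band_module s t B lam q =
    (let m = length B;
         E = {(p, j). p < m \<and> j < q};
         blk = (\<lambda>p0 j' j. if p0 = 0 then jordan lam j' j else (if j' = j then 1 else 0))
     in (E, (\<lambda>(p, j). lsrc s t (B!p)),
         (\<lambda>al (p', j') (p, j).
            if (p, j) \<in> E \<and> (p', j') \<in> E then
              (\<Sum>p0<m. (if B!p0 = Dir al \<and> p = p0 \<and> p' = Suc p0 mod m then blk p0 j' j else 0)
                     + (if B!p0 = Inv al \<and> p = Suc p0 mod m \<and> p' = p0 then blk p0 j' j else 0))
            else 0)))"

definition band_dimvec :: "('a \<Rightarrow> 'v) \<Rightarrow> ('a \<Rightarrow> 'v) \<Rightarrow> 'a letter list \<Rightarrow> nat \<Rightarrow> 'v \<Rightarrow> nat" where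
  "band_dimvec s t B q v = q * card {p. p < length B \<and> lsrc s t (B!p) = v}"

text \<open>A point of the affine space of representations with dimension vector d is
  x :: 'a \<times> nat \<times> nat \<Rightarrow> 'k, where x (al, i, j) is the (i, j) entry of the
  d(t al) \<times> d(s al) matrix of al; coordinates outside these ranges are 0.\<close>

definition mod_var :: "('a::finite \<Rightarrow> 'v::finite) \<Rightarrow> ('a \<Rightarrow> 'v) \<Rightarrow> ('a \<times> 'a) set \<Rightarrow> ('v \<Rightarrow> nat)
     \<Rightarrow> ('a \<times> nat \<times> nat \<Rightarrow> 'k::field) set" where
  "mod_var s t R d = {x.
     (\<forall>al i j. \<not> (i < d (t al) \<and> j < d (s al)) \<longrightarrow> x (al, i, j) = 0) \<and>
     (\<forall>(al, be) \<in> R. \<forall>i < d (t be). \<forall>k < d (s al).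
        (\<Sum>j< d (t al). x (be, i, j) * x (al, j, k)) = 0)}"

definition point_rep :: "('a \<Rightarrow> 'v) \<Rightarrow> ('a \<Rightarrow> 'v) \<Rightarrow> ('v \<Rightarrow> nat) \<Rightarrow> ('a \<times> nat \<times> nat \<Rightarrow> 'k::field)
     \<Rightarrow> ('v \<times> nat,'v,'a,'k) repr" where
  "point_rep s t d x = ({(v, i). i < d v}, fst,
     (\<lambda>al (v', i) (v, j). if v = s al \<and> v' = t al \<and> i < d v' \<and> j < d v then x (al, i, j) else 0))"

text \<open>Zariski topology: polynomial functions in the coordinates.\<close>

inductive_set polyfun :: "(('c \<Rightarrow> 'k::field) \<Rightarrow> 'k) set" where
  const: "(\<lambda>_. c) \<in> polyfun"
| coord: "(\<lambda>x. x i) \<in> polyfun"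
| add: "f \<in> polyfun \<Longrightarrow> g \<in> polyfun \<Longrightarrow> (\<lambda>x. f x + g x) \<in> polyfun"
| mult: "f \<in> polyfun \<Longrightarrow> g \<in> polyfun \<Longrightarrow> (\<lambda>x. f x * g x) \<in> polyfun"

definition zariski_closure :: "('c \<Rightarrow> 'k::field) set \<Rightarrow> ('c \<Rightarrow> 'k) set" where
  "zariski_closure S = {x. \<forall>f \<in> polyfun. (\<forall>y\<in>S. f y = 0) \<longrightarrow> f x = 0}"

text \<open>O_{B^q}: union over lam \<noteq> 0 of the orbits of M(B^q, lam, 1).\<close>
definition fam_power :: "('a::finite \<Rightarrow> 'v::finite) \<Rightarrow> ('a \<Rightarrow> 'v) \<Rightarrow> ('a \<times> 'a) set \<Rightarrow> ('v \<Rightarrow> nat)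
     \<Rightarrow> 'a letter list \<Rightarrow> nat \<Rightarrow> ('a \<times> nat \<times> nat \<Rightarrow> 'k::field) set" where
  "fam_power s t R d B q = {x \<in> mod_var s t R d.
     \<exists>lam::'k. lam \<noteq> 0 \<and>
       rep_iso (point_rep s t d x) (band_module s t (concat (replicate q B)) lam 1)}"

text \<open>O_{B^{\<times>q}}: union of the orbits of \<Oplus>_k M(B, lam_k, q_k), (q_k) a partition of q.\<close>
definition fam_mult :: "('a::finite \<Rightarrow> 'v::finite) \<Rightarrow> ('a \<Rightarrow> 'v) \<Rightarrow> ('a \<times> 'a) set \<Rightarrow> ('v \<Rightarrow> nat)
     \<Rightarrow> 'a letter list \<Rightarrow> nat \<Rightarrow> ('a \<times> nat \<times> nat \<Rightarrow> 'k::field) set" where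
  "fam_mult s t R d B q = {x \<in> mod_var s t R d.
     \<exists>ps :: ('k \<times> nat) list.
       (\<forall>(lam, qk) \<in> set ps. lam \<noteq> 0 \<and> qk \<ge> 1) \<and> (\<Sum>(lam, qk)\<leftarrow>ps. qk) = q \<and>
       rep_iso (point_rep s t d x) (dsum (map (\<lambda>(lam, qk). band_module s t B lam qk) ps))}"

end

theory Submission
  imports Defs Jordan_Normal_Form.Jordan_Normal_Form_Existence
begin


definition Lm :: "(nat \<Rightarrow> 'a::field) \<Rightarrow> nat \<Rightarrow> nat \<Rightarrow> 'a" where
  "Lm u i j = (if j = 0 then u i else if i = j then 1 else 0)"
definition Lmi :: "(nat \<Rightarrow> 'a::field) \<Rightarrow> nat \<Rightarrow> nat \<Rightarrow> 'a" where
  "Lmi u i j = (if j = 0 then (if i = 0 then 1 / u 0 else - u i / u 0) else if i = j then 1 else 0)"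

lemma sum_split0: "0 < (n::nat) \<Longrightarrow> (\<Sum>a\<in>{0..<n}. f a) = f 0 + (\<Sum>a\<in>{1..<n}. f a)"
  by (metis One_nat_def sum.atLeast_Suc_lessThan)

lemma sum_delta_if: "(\<Sum>a\<in>{1..<(n::nat)}. (if i = a then f a else 0)) = (if 1 \<le> i \<and> i < n then f i else 0)"
proof -
  have "(\<Sum>a\<in>{1..<n}. (if i = a then f a else 0)) = (\<Sum>a\<in>{1..<n}. (if a = i then f i else 0))"
    by (rule sum.cong, auto)
  also have "\<dots> = (if i \<in> {1..<n} then f i else 0)" by (rule sum.delta, simp)
  finally show ?thesis by auto
qed

lemma Lm_Lmi: assumes u0: "u 0 \<noteq> 0" and n: "0 < n" and i: "i < n" and j: "j < n"
  shows "(\<Sum>a\<in>{0..<n}. Lm u i a * Lmi u a j) = (if i = j then 1 else 0)"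
proof (cases "j = 0")
  case True
  have "(\<Sum>a\<in>{0..<n}. Lm u i a * Lmi u a j) = u i / u 0 + (\<Sum>a\<in>{1..<n}. (if i = a then - u a / u 0 else 0))"
    unfolding sum_split0[OF n] using True by (intro arg_cong2[where f="(+)"] sum.cong, auto simp: Lm_def Lmi_def)
  also have "\<dots> = (if i = j then 1 else 0)" unfolding sum_delta_if using u0 True i by auto
  finally show ?thesis .
next
  case False
  have "(\<Sum>a\<in>{0..<n}. Lm u i a * Lmi u a j) = (\<Sum>a\<in>{0..<n}. (if a = j then Lm u i j else 0))"
    by (rule sum.cong, auto simp: Lmi_def False)
  also have "\<dots> = Lm u i j" using j by (subst sum.delta, auto)
  finally show ?thesis using False by (simp add: Lm_def)
qed

lemma Lmi_Lm: assumes u0: "u 0 \<noteq> 0" and n: "0 < n" and i: "i < n" and j: "j < n"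
  shows "(\<Sum>a\<in>{0..<n}. Lmi u i a * Lm u a j) = (if i = j then 1 else 0)"
proof (cases "j = 0")
  case True
  show ?thesis
  proof (cases "i = 0")
    case True
    have "(\<Sum>a\<in>{0..<n}. Lmi u i a * Lm u a j) = 1 / u 0 * u 0 + (\<Sum>a\<in>{1..<n}. 0)"
      unfolding sum_split0[OF n] using True \<open>j = 0\<close> by (intro arg_cong2[where f="(+)"] sum.cong, auto simp: Lm_def Lmi_def)
    then show ?thesis using u0 True \<open>j=0\<close> by simp
  next
    case False
    have "(\<Sum>a\<in>{0..<n}. Lmi u i a * Lm u a j) = - u i / u 0 * u 0 + (\<Sum>a\<in>{1..<n}. (if i = a then u a else 0))"
      unfolding sum_split0[OF n] using True False by (intro arg_cong2[where f="(+)"] sum.cong, auto simp: Lm_def Lmi_def)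
    also have "\<dots> = 0" unfolding sum_delta_if using u0 False i by auto
    finally show ?thesis using True False by simp
  qed
next
  case False
  have "(\<Sum>a\<in>{0..<n}. Lmi u i a * Lm u a j) = (\<Sum>a\<in>{0..<n}. (if a = j then Lmi u i j else 0))"
    by (rule sum.cong, auto simp: Lm_def False)
  also have "\<dots> = Lmi u i j" using j by (subst sum.delta, auto)
  finally show ?thesis using False by (simp add: Lmi_def)
qed

definition swp :: "nat \<Rightarrow> nat \<Rightarrow> nat" where
  "swp k i = (if i = 0 then k else if i = k then 0 else i)"

lemma swp_swp[simp]: "swp k (swp k i) = i" unfolding swp_def by auto
lemma swp_lt[simp]: "k < n \<Longrightarrow> i < n \<Longrightarrow> swp k i < n" unfolding swp_def by auto
lemma swp_inj: "swp k i = swp k j \<longleftrightarrow> i = j" by (metis swp_swp)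

lemma invertible_col0:
  fixes v :: "'a::field vec"
  assumes v: "v \<in> carrier_vec n" and v0: "v \<noteq> 0\<^sub>v n"
  shows "\<exists>W W'. W \<in> carrier_mat n n \<and> W' \<in> carrier_mat n n \<and> W * W' = 1\<^sub>m n \<and> W' * W = 1\<^sub>m n
      \<and> W *\<^sub>v unit_vec n 0 = v"
proof -
  obtain k where k: "k < n" and vk: "v $ k \<noteq> 0"
    using v v0 by (metis carrier_vecD eq_vecI index_zero_vec(1) index_zero_vec(2))
  have n: "0 < n" using k by auto
  define u where "u = (\<lambda>a. v $ swp k a)"
  have u0: "u 0 \<noteq> 0" using vk by (simp add: u_def swp_def)
  define W where "W = mat n n (\<lambda>(i,j). Lm u (swp k i) j)"
  define W' where "W' = mat n n (\<lambda>(i,j). Lmi u i (swp k j))"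
  have W: "W \<in> carrier_mat n n" and W': "W' \<in> carrier_mat n n" unfolding W_def W'_def by auto
  have 1: "W * W' = 1\<^sub>m n"
  proof (rule eq_matI)
    fix i j assume i: "i < dim_row (1\<^sub>m n)" and j: "j < dim_col (1\<^sub>m n)"
    have "(W * W') $$ (i,j) = (\<Sum>a\<in>{0..<n}. Lm u (swp k i) a * Lmi u a (swp k j))"
      using i j W W' unfolding W_def W'_def by (simp add: scalar_prod_def)
    also have "\<dots> = (if swp k i = swp k j then 1 else 0)"
      by (rule Lm_Lmi[of u n], insert u0 n i j k, auto)
    finally show "(W * W') $$ (i,j) = 1\<^sub>m n $$ (i,j)" using i j by (simp add: swp_inj)
  qed (insert W W', auto)
  have 2: "W' * W = 1\<^sub>m n"
  proof (rule eq_matI)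
    fix i j assume i: "i < dim_row (1\<^sub>m n)" and j: "j < dim_col (1\<^sub>m n)"
    have "(W' * W) $$ (i,j) = (\<Sum>a\<in>{0..<n}. Lmi u i (swp k a) * Lm u (swp k a) j)"
      using i j W W' unfolding W_def W'_def by (simp add: scalar_prod_def)
    also have "\<dots> = (\<Sum>a\<in>{0..<n}. Lmi u i a * Lm u a j)"
    proof (rule sum.reindex_bij_betw)
      show "bij_betw (swp k) {0..<n} {0..<n}"
        by (rule bij_betwI[where g = "swp k"], insert k, auto)
    qed
    also have "\<dots> = (if i = j then 1 else 0)"
      by (rule Lmi_Lm[of u n], insert u0 n i j, auto)
    finally show "(W' * W) $$ (i,j) = 1\<^sub>m n $$ (i,j)" using i j by simp
  qed (insert W W', auto)
  have 3: "W *\<^sub>v unit_vec n 0 = v"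
  proof (rule eq_vecI)
    fix i assume i: "i < dim_vec v"
    then have "i < n" using v by auto
    then show "(W *\<^sub>v unit_vec n 0) $ i = v $ i"
      using n W unfolding W_def by (simp add: Lm_def u_def)
  qed (insert v W, auto)
  show ?thesis using W W' 1 2 3 by blast
qed

lemma triangularize:
  assumes alg: "alg_closed TYPE('a::field)"
  shows "(A :: 'a mat) \<in> carrier_mat n n \<Longrightarrow> \<exists>B. B \<in> carrier_mat n n \<and> upper_triangular B \<and> similar_mat A B"
proof (induction n arbitrary: A)
  case 0
  then show ?case using similar_mat_refl[OF 0] by (auto simp: upper_triangular_def)
next
  case (Suc n1 A)
  define n where "n = Suc n1"
  have A: "A \<in> carrier_mat n n" using Suc n_def by auto
  have n: "0 < n" "n - 1 = n1" unfolding n_def by auto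
  have "degree (char_poly A) = n" using degree_monic_char_poly[OF A] by auto
  then obtain e where "poly (char_poly A) e = 0" using alg unfolding alg_closed_def n_def by force
  then have ev: "eigenvalue A e" using eigenvalue_root_char_poly[OF A] by auto
  then obtain v where "eigenvector A v e" unfolding eigenvalue_def by auto
  then have v: "v \<in> carrier_vec n" and v0: "v \<noteq> 0\<^sub>v n" and Av: "A *\<^sub>v v = e \<cdot>\<^sub>v v"
    unfolding eigenvector_def using A by auto
  obtain W W' where W: "W \<in> carrier_mat n n" and W': "W' \<in> carrier_mat n n"
    and WW': "W * W' = 1\<^sub>m n" and W'W: "W' * W = 1\<^sub>m n" and Wv: "W *\<^sub>v unit_vec n 0 = v"
    using invertible_col0[OF v v0] by blast
  define A' where "A' = W' * A * W"
  have A': "A' \<in> carrier_mat n n" using W W' A unfolding A'_def by auto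
  have "A' *\<^sub>v unit_vec n 0 = W' *\<^sub>v (A *\<^sub>v (W *\<^sub>v unit_vec n 0))"
    unfolding A'_def using W W' A by (simp add: assoc_mult_mat_vec[of _ n n _ n])
  also have "\<dots> = e \<cdot>\<^sub>v (W' *\<^sub>v v)" unfolding Wv Av using W' v by (simp add: mult_mat_vec)
  also have "W' *\<^sub>v v = unit_vec n 0" using W W' unfolding Wv[symmetric]
    by (simp add: assoc_mult_mat_vec[symmetric, of _ n n _ n] W'W)
  finally have col0: "A' *\<^sub>v unit_vec n 0 = e \<cdot>\<^sub>v unit_vec n 0" .
  have A'col: "\<And>i. i < n \<Longrightarrow> A' $$ (i, 0) = (if i = 0 then e else 0)"
  proof -
    fix i assume i: "i < n"
    have "A' $$ (i, 0) = (A' *\<^sub>v unit_vec n 0) $ i" using A' i n by simp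
    then show "A' $$ (i, 0) = (if i = 0 then e else 0)" unfolding col0 using i by simp
  qed
  obtain A1 A2 A0 A3 where splitA': "split_block A' 1 1 = (A1,A2,A0,A3)"
    by (cases "split_block A' 1 1", auto)
  from A' n have "dim_row A' = 1 + n1" "dim_col A' = 1 + n1" by auto
  from split_block[OF splitA' this] have A2: "A2 \<in> carrier_mat 1 n1"
    and A3: "A3 \<in> carrier_mat n1 n1"
    and A'block: "A' = four_block_mat A1 A2 A0 A3" by auto
  have A1id: "A1 = mat 1 1 (\<lambda> _. e)"
    using splitA'[unfolded split_block_def Let_def] A'col A' n
    by (auto simp: col_def)
  have A1: "A1 \<in> carrier_mat 1 1" unfolding A1id by auto
  have A0id: "A0 = 0\<^sub>m n1 1"
    using splitA'[unfolded split_block_def Let_def] A'col A' n by auto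
  have A0: "A0 \<in> carrier_mat n1 1" unfolding A0id by auto
  from Suc.IH[OF A3] obtain B where B: "B \<in> carrier_mat n1 n1" and ut: "upper_triangular B"
    and sim3: "similar_mat A3 B" by auto
  from sim3 obtain P' Q' where simIH: "similar_mat_wit A3 B P' Q'" unfolding similar_mat_def by auto
  from similar_mat_witD2[OF A3 simIH]
  have P': "P' \<in> carrier_mat n1 n1" and Q': "Q' \<in> carrier_mat n1 n1"
    and PQ': "P' * Q' = 1\<^sub>m n1" by auto
  let ?P' = "four_block_mat (1\<^sub>m 1) (0\<^sub>m 1 n1) (0\<^sub>m n1 1) P'"
  let ?Q' = "four_block_mat (1\<^sub>m 1) (0\<^sub>m 1 n1) (0\<^sub>m n1 1) Q'"
  define C where "C = four_block_mat A1 (A2 * P') A0 B"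
  have A0_eq: "A0 = P' * A0 * 1\<^sub>m 1" unfolding A0id using P' by auto
  have simA'C: "similar_mat_wit A' C ?P' ?Q'" unfolding A'block C_def
    by (rule similar_mat_wit_four_block[OF similar_mat_wit_refl[OF A1] simIH _ A0_eq A1 A3 A0],
    insert PQ' A2 P' Q', auto)
  have ut1: "upper_triangular A1" unfolding A1id by auto
  have utC: "upper_triangular C" unfolding C_def A0id
    by (intro upper_triangular_four_block[OF _ B ut1 ut], auto simp: A1id)
  have Cc: "C \<in> carrier_mat n n" unfolding C_def using A1 A2 P' B n by auto
  have "W * A' * W' = (W * W') * A * (W * W')" unfolding A'_def using W W' A
    by (simp add: assoc_mult_mat[of _ n n _ n _ n])
  then have "A = W * A' * W'" using A unfolding WW' by simp
  then have "similar_mat_wit A A' W W'"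
    by (intro similar_mat_witI[OF WW' W'W _ A A' W W'])
  then have "similar_mat A C" using simA'C unfolding similar_mat_def
    by (meson similar_mat_wit_trans)
  then show ?case using Cc utC unfolding n_def by blast
qed


lemma poly_prod_list_0: "poly (prod_list xs) (x::'a::field) = prod_list (map (\<lambda>p. poly p x) xs)"
  by (induct xs, auto)

lemma jnf_fun:
  fixes C0 :: "nat \<Rightarrow> nat \<Rightarrow> 'a::field"
  assumes alg: "alg_closed TYPE('a)"
    and inv: "\<forall>i<q. \<forall>j<q. (\<Sum>a\<in>{0..<q}. C0 i a * Ci a j) = (if i = j then 1 else 0)"
  shows "\<exists>ns P Q. (\<forall>(n,a)\<in>set ns. n \<ge> 1 \<and> a \<noteq> 0) \<and> sum_list (map fst ns) = q
     \<and> (\<forall>i<q. \<forall>j<q. (\<Sum>a\<in>{0..<q}. P i a * Q a j) = (if i = j then 1 else 0))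
     \<and> (\<forall>i<q. \<forall>j<q. (\<Sum>a\<in>{0..<q}. Q i a * P a j) = (if i = j then 1 else 0))
     \<and> (\<forall>i<q. \<forall>j<q. (\<Sum>a\<in>{0..<q}. jordan_matrix ns $$ (i,a) * Q a j) = (\<Sum>a\<in>{0..<q}. Q i a * C0 a j))"
proof -
  define Cm where "Cm = mat q q (\<lambda>(i,j). C0 i j)"
  define Cim where "Cim = mat q q (\<lambda>(i,j). Ci i j)"
  have Cm: "Cm \<in> carrier_mat q q" and Cim: "Cim \<in> carrier_mat q q" unfolding Cm_def Cim_def by auto
  have CC: "Cm * Cim = 1\<^sub>m q"
  proof (rule eq_matI)
    fix i j assume ij: "i < dim_row (1\<^sub>m q)" "j < dim_col (1\<^sub>m q)"
    then have "(Cm * Cim) $$ (i,j) = (\<Sum>a\<in>{0..<q}. C0 i a * Ci a j)"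
      unfolding Cm_def Cim_def by (simp add: scalar_prod_def)
    also have "\<dots> = (if i = j then 1 else 0)" using inv ij by simp
    finally show "(Cm * Cim) $$ (i,j) = 1\<^sub>m q $$ (i,j)" using ij by simp
  qed (auto simp: Cm_def Cim_def)
  have "det Cm * det Cim = 1" using det_mult[OF Cm Cim] CC by simp
  then have detC: "det Cm \<noteq> 0" by auto
  obtain T where T: "T \<in> carrier_mat q q" and utT: "upper_triangular T" and simT: "similar_mat Cm T"
    using triangularize[OF alg Cm] by blast
  define ns where "ns = triangular_to_jnf_vector T"
  have jnf: "jordan_nf T ns" unfolding ns_def by (rule triangular_to_jnf_vector[OF T utT])
  then have simJ: "similar_mat Cm (jordan_matrix ns)" and n0: "0 \<notin> fst ` set ns"
    using simT similar_mat_trans unfolding jordan_nf_def by blast+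
  define J where "J = jordan_matrix ns"
  obtain P Q where wit: "similar_mat_wit Cm J P Q" using simJ unfolding similar_mat_def J_def by blast
  from similar_mat_witD2[OF Cm wit] have PQ: "P * Q = 1\<^sub>m q" and QP: "Q * P = 1\<^sub>m q"
    and CPJQ: "Cm = P * J * Q" and J: "J \<in> carrier_mat q q" and P: "P \<in> carrier_mat q q"
    and Q: "Q \<in> carrier_mat q q" by auto
  have sumq: "sum_list (map fst ns) = q" using J unfolding J_def
    by (metis carrier_matD(1) jordan_matrix_dim(1))
  have detJ: "det J \<noteq> 0"
  proof
    assume "det J = 0"
    moreover have "det Cm = det P * det J * det Q" unfolding CPJQ
      using det_mult[OF mult_carrier_mat[OF P J] Q] det_mult[OF P J] P J by simp
    ultimately have "det Cm = 0" by simp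
    with detC show False by simp
  qed
  have nz: "\<forall>(n,a)\<in>set ns. n \<ge> 1 \<and> a \<noteq> 0"
  proof (intro ballI, clarify)
    fix n a assume na: "(n, a) \<in> set ns"
    have "n \<in> fst ` set ns" using na by (rule rev_image_eqI, simp)
    then have n1: "n \<ge> 1" using n0 by (cases n, auto)
    show "1 \<le> n \<and> a \<noteq> 0"
    proof (rule conjI[OF n1], rule notI)
      assume a0: "a = 0"
      define h where "h = (\<lambda>(n::nat, a::'a). poly ([:- a, 1:] ^ n) 0)"
      have "poly (char_poly J) 0 = prod_list (map h ns)"
        unfolding J_def jordan_matrix_char_poly poly_prod_list_0
        by (induct ns, auto simp: h_def poly_power)
      also have "\<dots> = 0"
      proof -
        have "h (n, a) = 0" using a0 n1 unfolding h_def by (simp add: poly_power)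
        then have "0 \<in> set (map h ns)" using na by (metis image_eqI list.set_map)
        then show ?thesis by (simp add: prod_list_zero_iff)
      qed
      finally have "eigenvalue J 0" using eigenvalue_root_char_poly[OF J] by simp
      then obtain v where "eigenvector J v 0" unfolding eigenvalue_def by auto
      then have "v \<in> carrier_vec q" "v \<noteq> 0\<^sub>v q" "J *\<^sub>v v = 0\<^sub>v q"
        unfolding eigenvector_def using J by auto
      then have "det J = 0" using det_0_iff_vec_prod_zero_field[OF J] by blast
      with detJ show False by simp
    qed
  qed
  have JQ: "J * Q = Q * Cm"
  proof -
    have "Q * Cm = (Q * P) * J * Q" unfolding CPJQ using P J Q
      by (simp add: assoc_mult_mat[of _ q q _ q _ q])
    also have "\<dots> = J * Q" using QP J Q by simp
    finally show ?thesis by simp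
  qed
  define Pf where "Pf = (\<lambda>i j. P $$ (i,j))"
  define Qf where "Qf = (\<lambda>i j. Q $$ (i,j))"
  have 1: "\<forall>i<q. \<forall>j<q. (\<Sum>a\<in>{0..<q}. Pf i a * Qf a j) = (if i = j then 1 else 0)"
  proof (intro allI impI)
    fix i j assume "i < q" "j < q"
    then show "(\<Sum>a\<in>{0..<q}. Pf i a * Qf a j) = (if i = j then 1 else 0)"
      using arg_cong[OF PQ, of "\<lambda>M. M $$ (i,j)"] P Q unfolding Pf_def Qf_def by (simp add: scalar_prod_def)
  qed
  have 2: "\<forall>i<q. \<forall>j<q. (\<Sum>a\<in>{0..<q}. Qf i a * Pf a j) = (if i = j then 1 else 0)"
  proof (intro allI impI)
    fix i j assume "i < q" "j < q"
    then show "(\<Sum>a\<in>{0..<q}. Qf i a * Pf a j) = (if i = j then 1 else 0)"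
      using arg_cong[OF QP, of "\<lambda>M. M $$ (i,j)"] P Q unfolding Pf_def Qf_def by (simp add: scalar_prod_def)
  qed
  have 3: "\<forall>i<q. \<forall>j<q. (\<Sum>a\<in>{0..<q}. jordan_matrix ns $$ (i,a) * Qf a j) = (\<Sum>a\<in>{0..<q}. Qf i a * C0 a j)"
  proof (intro allI impI)
    fix i j assume "i < q" "j < q"
    then show "(\<Sum>a\<in>{0..<q}. jordan_matrix ns $$ (i,a) * Qf a j) = (\<Sum>a\<in>{0..<q}. Qf i a * C0 a j)"
      using arg_cong[OF JQ, of "\<lambda>M. M $$ (i,j)"] J Q unfolding Qf_def J_def[symmetric]
      by (simp add: scalar_prod_def Cm_def)
  qed
  show ?thesis using nz sumq 1 2 3 by blast
qed


lemma rep_iso_trans: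
  fixes M :: "('e1,'v,'a,'k::field) repr" and N :: "('e2,'v,'a,'k) repr" and L :: "('e3,'v,'a,'k) repr"
  assumes MN: "rep_iso M N" and NL: "rep_iso N L"
    and f1: "finite (fst M)" and f2: "finite (fst N)" and f3: "finite (fst L)"
  shows "rep_iso M L"
proof -
  obtain E1 vt1 a1 where M: "M = (E1, vt1, a1)" by (cases M, auto)
  obtain E2 vt2 a2 where N: "N = (E2, vt2, a2)" by (cases N, auto)
  obtain E3 vt3 a3 where L: "L = (E3, vt3, a3)" by (cases L, auto)
  have f1: "finite E1" and f2: "finite E2" and f3: "finite E3" using f1 f2 f3 M N L by auto
  from MN obtain \<phi>1 :: "'e2 \<Rightarrow> 'e1 \<Rightarrow> 'k" and \<psi>1 where
    s1: "\<forall>e2 e1. \<phi>1 e2 e1 \<noteq> 0 \<longrightarrow> e1 \<in> E1 \<and> e2 \<in> E2 \<and> vt1 e1 = vt2 e2" and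
    t1: "\<forall>e1 e2. \<psi>1 e1 e2 \<noteq> 0 \<longrightarrow> e1 \<in> E1 \<and> e2 \<in> E2 \<and> vt1 e1 = vt2 e2" and
    i1: "\<forall>e\<in>E2. \<forall>e'\<in>E2. (\<Sum>x\<in>E1. \<phi>1 e x * \<psi>1 x e') = (if e = e' then 1 else 0)" and
    j1: "\<forall>e\<in>E1. \<forall>e'\<in>E1. (\<Sum>x\<in>E2. \<psi>1 e x * \<phi>1 x e') = (if e = e' then 1 else 0)" and
    c1: "\<forall>al. \<forall>e2\<in>E2. \<forall>e1\<in>E1. (\<Sum>x\<in>E2. a2 al e2 x * \<phi>1 x e1) = (\<Sum>y\<in>E1. \<phi>1 e2 y * a1 al y e1)"
    unfolding rep_iso_def M N by auto
  from NL obtain \<phi>2 :: "'e3 \<Rightarrow> 'e2 \<Rightarrow> 'k" and \<psi>2 where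
    s2: "\<forall>e2 e1. \<phi>2 e2 e1 \<noteq> 0 \<longrightarrow> e1 \<in> E2 \<and> e2 \<in> E3 \<and> vt2 e1 = vt3 e2" and
    t2: "\<forall>e1 e2. \<psi>2 e1 e2 \<noteq> 0 \<longrightarrow> e1 \<in> E2 \<and> e2 \<in> E3 \<and> vt2 e1 = vt3 e2" and
    i2: "\<forall>e\<in>E3. \<forall>e'\<in>E3. (\<Sum>x\<in>E2. \<phi>2 e x * \<psi>2 x e') = (if e = e' then 1 else 0)" and
    j2: "\<forall>e\<in>E2. \<forall>e'\<in>E2. (\<Sum>x\<in>E3. \<psi>2 e x * \<phi>2 x e') = (if e = e' then 1 else 0)" and
    c2: "\<forall>al. \<forall>e2\<in>E3. \<forall>e1\<in>E2. (\<Sum>x\<in>E3. a3 al e2 x * \<phi>2 x e1) = (\<Sum>y\<in>E2. \<phi>2 e2 y * a2 al y e1)"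
    unfolding rep_iso_def N L by auto
  define \<phi> where "\<phi> = (\<lambda>e3 e1. \<Sum>y\<in>E2. \<phi>2 e3 y * \<phi>1 y e1)"
  define \<psi> where "\<psi> = (\<lambda>e1 e3. \<Sum>y\<in>E2. \<psi>1 e1 y * \<psi>2 y e3)"
  have s: "\<forall>e3 e1. \<phi> e3 e1 \<noteq> 0 \<longrightarrow> e1 \<in> E1 \<and> e3 \<in> E3 \<and> vt1 e1 = vt3 e3"
  proof (intro allI impI)
    fix e3 e1 assume "\<phi> e3 e1 \<noteq> 0"
    then obtain y where "\<phi>2 e3 y * \<phi>1 y e1 \<noteq> 0" unfolding \<phi>_def by (rule sum.not_neutral_contains_not_neutral)
    then show "e1 \<in> E1 \<and> e3 \<in> E3 \<and> vt1 e1 = vt3 e3" using s1 s2 by fastforce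
  qed
  have t: "\<forall>e1 e3. \<psi> e1 e3 \<noteq> 0 \<longrightarrow> e1 \<in> E1 \<and> e3 \<in> E3 \<and> vt1 e1 = vt3 e3"
  proof (intro allI impI)
    fix e3 e1 assume "\<psi> e1 e3 \<noteq> 0"
    then obtain y where "\<psi>1 e1 y * \<psi>2 y e3 \<noteq> 0" unfolding \<psi>_def by (rule sum.not_neutral_contains_not_neutral)
    then show "e1 \<in> E1 \<and> e3 \<in> E3 \<and> vt1 e1 = vt3 e3" using t1 t2 by fastforce
  qed
  have i: "\<forall>e\<in>E3. \<forall>e'\<in>E3. (\<Sum>x\<in>E1. \<phi> e x * \<psi> x e') = (if e = e' then 1 else 0)"
  proof (intro ballI)
    fix e e' assume e: "e \<in> E3" and e': "e' \<in> E3"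
    have "(\<Sum>x\<in>E1. \<phi> e x * \<psi> x e') = (\<Sum>x\<in>E1. \<Sum>y\<in>E2. \<Sum>z\<in>E2. \<phi>2 e y * (\<phi>1 y x * \<psi>1 x z) * \<psi>2 z e')"
      unfolding \<phi>_def \<psi>_def sum_product by (intro sum.cong refl) (simp add: mult.assoc)
    also have "\<dots> = (\<Sum>y\<in>E2. \<Sum>z\<in>E2. \<phi>2 e y * (\<Sum>x\<in>E1. \<phi>1 y x * \<psi>1 x z) * \<psi>2 z e')"
      by (subst sum.swap, intro sum.cong refl, subst sum.swap, simp add: sum_distrib_left sum_distrib_right)
    also have "\<dots> = (\<Sum>y\<in>E2. \<Sum>z\<in>E2. if y = z then \<phi>2 e y * \<psi>2 z e' else 0)"
      using i1 by (intro sum.cong refl, auto)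
    also have "\<dots> = (\<Sum>y\<in>E2. \<phi>2 e y * \<psi>2 y e')"
      using f2 by (simp add: sum.delta)
    also have "\<dots> = (if e = e' then 1 else 0)" using i2 e e' by auto
    finally show "(\<Sum>x\<in>E1. \<phi> e x * \<psi> x e') = (if e = e' then 1 else 0)" .
  qed
  have j: "\<forall>e\<in>E1. \<forall>e'\<in>E1. (\<Sum>x\<in>E3. \<psi> e x * \<phi> x e') = (if e = e' then 1 else 0)"
  proof (intro ballI)
    fix e e' assume e: "e \<in> E1" and e': "e' \<in> E1"
    have "(\<Sum>x\<in>E3. \<psi> e x * \<phi> x e') = (\<Sum>x\<in>E3. \<Sum>y\<in>E2. \<Sum>z\<in>E2. \<psi>1 e y * (\<psi>2 y x * \<phi>2 x z) * \<phi>1 z e')"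
      unfolding \<phi>_def \<psi>_def sum_product by (intro sum.cong refl) (simp add: mult.assoc)
    also have "\<dots> = (\<Sum>y\<in>E2. \<Sum>z\<in>E2. \<psi>1 e y * (\<Sum>x\<in>E3. \<psi>2 y x * \<phi>2 x z) * \<phi>1 z e')"
      by (subst sum.swap, intro sum.cong refl, subst sum.swap, simp add: sum_distrib_left sum_distrib_right)
    also have "\<dots> = (\<Sum>y\<in>E2. \<Sum>z\<in>E2. if y = z then \<psi>1 e y * \<phi>1 z e' else 0)"
      using j2 by (intro sum.cong refl, auto)
    also have "\<dots> = (\<Sum>y\<in>E2. \<psi>1 e y * \<phi>1 y e')"
      using f2 by (simp add: sum.delta)
    also have "\<dots> = (if e = e' then 1 else 0)" using j1 e e' by auto
    finally show "(\<Sum>x\<in>E3. \<psi> e x * \<phi> x e') = (if e = e' then 1 else 0)" .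
  qed
  have c: "\<forall>al. \<forall>e3\<in>E3. \<forall>e1\<in>E1. (\<Sum>x\<in>E3. a3 al e3 x * \<phi> x e1) = (\<Sum>y\<in>E1. \<phi> e3 y * a1 al y e1)"
  proof (intro allI ballI)
    fix al e3 e1 assume e3: "e3 \<in> E3" and e1: "e1 \<in> E1"
    have "(\<Sum>x\<in>E3. a3 al e3 x * \<phi> x e1) = (\<Sum>y\<in>E2. (\<Sum>x\<in>E3. a3 al e3 x * \<phi>2 x y) * \<phi>1 y e1)"
      unfolding \<phi>_def sum_distrib_left by (subst sum.swap, simp add: sum_distrib_right mult.assoc)
    also have "\<dots> = (\<Sum>y\<in>E2. (\<Sum>z\<in>E2. \<phi>2 e3 z * a2 al z y) * \<phi>1 y e1)"
      using c2 e3 by (intro sum.cong refl, auto)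
    also have "\<dots> = (\<Sum>z\<in>E2. \<phi>2 e3 z * (\<Sum>y\<in>E2. a2 al z y * \<phi>1 y e1))"
      unfolding sum_distrib_left sum_distrib_right by (subst sum.swap, simp add: mult.assoc)
    also have "\<dots> = (\<Sum>z\<in>E2. \<phi>2 e3 z * (\<Sum>w\<in>E1. \<phi>1 z w * a1 al w e1))"
      using c1 e1 by (intro sum.cong refl, auto)
    also have "\<dots> = (\<Sum>w\<in>E1. \<phi> e3 w * a1 al w e1)"
      unfolding \<phi>_def sum_distrib_left sum_distrib_right by (subst sum.swap, simp add: mult.assoc)
    finally show "(\<Sum>x\<in>E3. a3 al e3 x * \<phi> x e1) = (\<Sum>y\<in>E1. \<phi> e3 y * a1 al y e1)" .
  qed
  show ?thesis unfolding rep_iso_def M L prod.case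
    by (rule exI[of _ \<phi>], rule exI[of _ \<psi>], intro conjI s t i j c)
qed

lemma rep_iso_bij:
  fixes g :: "'e2 \<Rightarrow> 'e1"
  assumes bij: "bij_betw g E2 E1" and fin: "finite E1"
    and vt: "\<And>e. e \<in> E2 \<Longrightarrow> vt1 (g e) = vt2 e"
    and act: "\<And>al e e'. e \<in> E2 \<Longrightarrow> e' \<in> E2 \<Longrightarrow> a2 al e' e = (a1 al (g e') (g e) :: 'k::field)"
  shows "rep_iso (E1, vt1, a1) (E2, vt2, a2)"
proof -
  have fin2: "finite E2" using bij fin bij_betw_finite by blast
  have inj: "inj_on g E2" and img: "g ` E2 = E1" using bij unfolding bij_betw_def by auto
  define \<phi> :: "'e2 \<Rightarrow> 'e1 \<Rightarrow> 'k" where "\<phi> = (\<lambda>e2 e1. if e2 \<in> E2 \<and> e1 = g e2 then 1 else 0)"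
  define \<psi> :: "'e1 \<Rightarrow> 'e2 \<Rightarrow> 'k" where "\<psi> = (\<lambda>e1 e2. if e2 \<in> E2 \<and> e1 = g e2 then 1 else 0)"
  have reidx: "\<And>f. (\<Sum>x\<in>E2. f (g x)) = (\<Sum>y\<in>E1. f y)"
    using sum.reindex_bij_betw[OF bij] by blast
  have s: "\<forall>e2 e1. \<phi> e2 e1 \<noteq> 0 \<longrightarrow> e1 \<in> E1 \<and> e2 \<in> E2 \<and> vt1 e1 = vt2 e2"
    unfolding \<phi>_def using img vt by auto
  have t: "\<forall>e1 e2. \<psi> e1 e2 \<noteq> 0 \<longrightarrow> e1 \<in> E1 \<and> e2 \<in> E2 \<and> vt1 e1 = vt2 e2"
    unfolding \<psi>_def using img vt by auto
  have i: "\<forall>e\<in>E2. \<forall>e'\<in>E2. (\<Sum>x\<in>E1. \<phi> e x * \<psi> x e') = (if e = e' then 1 else 0)"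
  proof (intro ballI)
    fix e e' assume e: "e \<in> E2" and e': "e' \<in> E2"
    have "(\<Sum>x\<in>E1. \<phi> e x * \<psi> x e') = (\<Sum>x\<in>E1. if x = g e then (if g e = g e' then 1 else 0) else 0)"
      unfolding \<phi>_def \<psi>_def using e e' by (intro sum.cong refl, auto)
    also have "\<dots> = (if g e = g e' then 1 else 0)" using fin e e' img imageI[OF e', of g] by (simp add: sum.delta)
    also have "\<dots> = (if e = e' then 1 else 0)" using inj e e' by (auto dest: inj_onD)
    finally show "(\<Sum>x\<in>E1. \<phi> e x * \<psi> x e') = (if e = e' then 1 else 0)" .
  qed
  have j: "\<forall>e\<in>E1. \<forall>e'\<in>E1. (\<Sum>x\<in>E2. \<psi> e x * \<phi> x e') = (if e = e' then 1 else 0)"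
  proof (intro ballI)
    fix e e' assume e: "e \<in> E1" and e': "e' \<in> E1"
    have "(\<Sum>x\<in>E2. \<psi> e x * \<phi> x e') = (\<Sum>x\<in>E2. (\<lambda>y. if y = e then (if y = e' then 1 else 0) else 0) (g x))"
      unfolding \<phi>_def \<psi>_def by (intro sum.cong refl, auto)
    also have "\<dots> = (\<Sum>y\<in>E1. if y = e then (if y = e' then 1 else 0) else 0)" by (rule reidx)
    also have "\<dots> = (if e = e' then 1 else 0)" using fin e by (simp add: sum.delta)
    finally show "(\<Sum>x\<in>E2. \<psi> e x * \<phi> x e') = (if e = e' then 1 else 0)" .
  qed
  have c: "\<forall>al. \<forall>e2\<in>E2. \<forall>e1\<in>E1. (\<Sum>x\<in>E2. a2 al e2 x * \<phi> x e1) = (\<Sum>y\<in>E1. \<phi> e2 y * a1 al y e1)"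
  proof (intro allI ballI)
    fix al e2 e1 assume e2: "e2 \<in> E2" and e1: "e1 \<in> E1"
    have "(\<Sum>x\<in>E2. a2 al e2 x * \<phi> x e1) = (\<Sum>x\<in>E2. (\<lambda>y. if e1 = y then a1 al (g e2) y else 0) (g x))"
      unfolding \<phi>_def using act e2 by (intro sum.cong refl, auto)
    also have "\<dots> = (\<Sum>y\<in>E1. if e1 = y then a1 al (g e2) y else 0)" by (rule reidx)
    also have "\<dots> = a1 al (g e2) e1" using fin e1 by (simp add: sum.delta)
    also have "\<dots> = (\<Sum>y\<in>E1. if y = g e2 then a1 al y e1 else 0)" using fin e2 img imageI[OF e2, of g] by (simp add: sum.delta)
    also have "\<dots> = (\<Sum>y\<in>E1. \<phi> e2 y * a1 al y e1)" unfolding \<phi>_def using e2 by (intro sum.cong refl, auto)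
    finally show "(\<Sum>x\<in>E2. a2 al e2 x * \<phi> x e1) = (\<Sum>y\<in>E1. \<phi> e2 y * a1 al y e1)" .
  qed
  show ?thesis unfolding rep_iso_def prod.case
    by (rule exI[of _ \<phi>], rule exI[of _ \<psi>], intro conjI s t i j c)
qed


definition gblk :: "(nat \<Rightarrow> nat \<Rightarrow> 'k::field) \<Rightarrow> nat \<Rightarrow> nat \<Rightarrow> nat \<Rightarrow> 'k" where
  "gblk C p0 j' j = (if p0 = 0 then C j' j else if j' = j then 1 else 0)"

definition gact :: "'a letter list \<Rightarrow> (nat \<Rightarrow> nat \<Rightarrow> 'k::field) \<Rightarrow> nat \<Rightarrow> 'a \<Rightarrow> nat \<times> nat \<Rightarrow> nat \<times> nat \<Rightarrow> 'k" where
  "gact B C n al e' e = (case e' of (p', j') \<Rightarrow> case e of (p, j) \<Rightarrow>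
     if p < length B \<and> j < n \<and> p' < length B \<and> j' < n then
      (if B!p = Dir al \<and> p' = Suc p mod length B then gblk C p j' j else 0) +
      (if B!p' = Inv al \<and> p = Suc p' mod length B then gblk C p' j' j else 0) else 0)"

definition gbm :: "('a \<Rightarrow> 'v) \<Rightarrow> ('a \<Rightarrow> 'v) \<Rightarrow> 'a letter list \<Rightarrow> (nat \<Rightarrow> nat \<Rightarrow> 'k::field) \<Rightarrow> nat
     \<Rightarrow> (nat \<times> nat,'v,'a,'k) repr" where
  "gbm s t B C n = ({(p,j). p < length B \<and> j < n}, (\<lambda>(p,j). lsrc s t (B!p)), gact B C n)"

lemma sum_collapse1: "finite A \<Longrightarrow> (\<Sum>x\<in>A. (if P x \<and> p = x \<and> Q x then f x else 0)) = (if p \<in> A \<and> P p \<and> Q p then f p else 0)"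
proof -
  assume A: "finite A"
  have "(\<Sum>x\<in>A. (if P x \<and> p = x \<and> Q x then f x else 0)) = (\<Sum>x\<in>A. (if x = p then (if P p \<and> Q p then f p else 0) else 0))"
    by (rule sum.cong, auto)
  also have "\<dots> = (if p \<in> A \<and> P p \<and> Q p then f p else 0)" using A by (simp add: sum.delta)
  finally show ?thesis .
qed

lemma sum_collapse2: "finite A \<Longrightarrow> (\<Sum>x\<in>A. (if P x \<and> Q x \<and> p = x then f x else 0)) = (if p \<in> A \<and> P p \<and> Q p then f p else 0)"
proof -
  assume A: "finite A"
  have "(\<Sum>x\<in>A. (if P x \<and> Q x \<and> p = x then f x else 0)) = (\<Sum>x\<in>A. (if x = p then (if P p \<and> Q p then f p else 0) else 0))"
    by (rule sum.cong, auto)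
  also have "\<dots> = (if p \<in> A \<and> P p \<and> Q p then f p else 0)" using A by (simp add: sum.delta)
  finally show ?thesis .
qed

lemma band_module_gbm: "band_module s t B lam q = gbm s t B (jordan lam) q"
proof -
  have "\<And>al p' j' p j. p < length B \<Longrightarrow> p' < length B \<Longrightarrow>
    (\<Sum>p0<length B. (if B!p0 = Dir al \<and> p = p0 \<and> p' = Suc p0 mod length B then gblk (jordan lam) p0 j' j else 0)
                     + (if B!p0 = Inv al \<and> p = Suc p0 mod length B \<and> p' = p0 then gblk (jordan lam) p0 j' j else 0))
    = (if B!p = Dir al \<and> p' = Suc p mod length B then gblk (jordan lam) p j' j else 0) +
      (if B!p' = Inv al \<and> p = Suc p' mod length B then gblk (jordan lam) p' j' j else 0)"
    by (simp add: sum.distrib sum_collapse1 sum_collapse2)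
  then show ?thesis
    unfolding band_module_def gbm_def Let_def gact_def gblk_def
    by (intro prod_eqI, simp, simp, (intro ext, clarsimp))
qed

lemma sum_E: "(\<Sum>x\<in>{(p,j). p < (m::nat) \<and> j < (n::nat)}. f x) = (\<Sum>p\<in>{0..<m}. \<Sum>j\<in>{0..<n}. f (p,j))"
proof -
  have "{(p,j). p < m \<and> j < n} = {0..<m} \<times> {0..<n}" by auto
  then show ?thesis by (simp add: sum.cartesian_product)
qed

lemma gblk_comm:
  assumes DQ: "\<forall>i<n. \<forall>j<n. (\<Sum>a\<in>{0..<n}. D i a * Q a j) = (\<Sum>a\<in>{0..<n}. Q i a * C a j)"
    and j2: "j2 < n" and j1: "j1 < n"
  shows "(\<Sum>j\<in>{0..<n}. gblk D p0 j2 j * Q j j1) = (\<Sum>j\<in>{0..<n}. Q j2 j * gblk C p0 j j1)"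
proof (cases "p0 = 0")
  case True
  then show ?thesis using DQ j1 j2 by (simp add: gblk_def)
next
  case False
  have "(\<Sum>j\<in>{0..<n}. gblk D p0 j2 j * Q j j1) = (\<Sum>j\<in>{0..<n}. if j = j2 then Q j2 j1 else 0)"
    using False by (intro sum.cong, auto simp: gblk_def)
  also have "\<dots> = Q j2 j1" using j2 by (simp add: sum.delta)
  also have "\<dots> = (\<Sum>j\<in>{0..<n}. if j = j1 then Q j2 j1 else 0)" using j1 by (simp add: sum.delta)
  also have "\<dots> = (\<Sum>j\<in>{0..<n}. Q j2 j * gblk C p0 j j1)"
    using False by (intro sum.cong, auto simp: gblk_def)
  finally show ?thesis .
qed

lemma sum_delta_nat: "(p::nat) < m \<Longrightarrow> (\<Sum>a\<in>{0..<m}. if a = p then F a else 0) = F p"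
  by (simp add: sum.delta)

lemma gbm_sim:
  fixes C D P Q :: "nat \<Rightarrow> nat \<Rightarrow> 'k::field"
  assumes PQ: "\<forall>i<n. \<forall>j<n. (\<Sum>a\<in>{0..<n}. P i a * Q a j) = (if i = j then 1 else 0)"
    and QP: "\<forall>i<n. \<forall>j<n. (\<Sum>a\<in>{0..<n}. Q i a * P a j) = (if i = j then 1 else 0)"
    and DQ: "\<forall>i<n. \<forall>j<n. (\<Sum>a\<in>{0..<n}. D i a * Q a j) = (\<Sum>a\<in>{0..<n}. Q i a * C a j)"
  shows "rep_iso (gbm s t B C n) (gbm s t B D n)"
proof -
  define m where "m = length B"
  define E where "E = {(p,j). p < m \<and> j < n}"
  define \<phi> :: "nat \<times> nat \<Rightarrow> nat \<times> nat \<Rightarrow> 'k" where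
    "\<phi> = (\<lambda>(p2, j2) (p1, j1). if p2 = p1 \<and> p1 < m \<and> j1 < n \<and> j2 < n then Q j2 j1 else 0)"
  define \<psi> :: "nat \<times> nat \<Rightarrow> nat \<times> nat \<Rightarrow> 'k" where
    "\<psi> = (\<lambda>(p1, j1) (p2, j2). if p1 = p2 \<and> p1 < m \<and> j1 < n \<and> j2 < n then P j1 j2 else 0)"
  define vt where "vt = (\<lambda>(p::nat, j::nat). lsrc s t (B!p))"
  have s: "\<forall>e2 e1. \<phi> e2 e1 \<noteq> 0 \<longrightarrow> e1 \<in> E \<and> e2 \<in> E \<and> vt e1 = vt e2"
    unfolding \<phi>_def E_def vt_def by (auto split: if_splits)
  have t: "\<forall>e1 e2. \<psi> e1 e2 \<noteq> 0 \<longrightarrow> e1 \<in> E \<and> e2 \<in> E \<and> vt e1 = vt e2"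
    unfolding \<psi>_def E_def vt_def by (auto split: if_splits)
  have i: "\<forall>e\<in>E. \<forall>e'\<in>E. (\<Sum>x\<in>E. \<phi> e x * \<psi> x e') = (if e = e' then 1 else 0)"
  proof (intro ballI)
    fix e e' assume e: "e \<in> E" and e': "e' \<in> E"
    obtain p j where pj: "e = (p,j)" "p < m" "j < n" using e unfolding E_def by auto
    obtain p' j' where pj': "e' = (p',j')" "p' < m" "j' < n" using e' unfolding E_def by auto
    have "(\<Sum>x\<in>E. \<phi> e x * \<psi> x e') = (\<Sum>a\<in>{0..<m}. \<Sum>b\<in>{0..<n}. \<phi> (p,j) (a,b) * \<psi> (a,b) (p',j'))"
      unfolding E_def sum_E pj(1) pj'(1) ..
    also have "\<dots> = (\<Sum>a\<in>{0..<m}. if a = p then (\<lambda>a. (if p = p' then (\<Sum>b\<in>{0..<n}. Q j b * P b j') else 0)) a else 0)"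
      unfolding \<phi>_def \<psi>_def using pj pj' by (intro sum.cong refl, auto intro!: sum.cong)
    also have "\<dots> = (if p = p' then (\<Sum>b\<in>{0..<n}. Q j b * P b j') else 0)"
      by (rule sum_delta_nat[OF pj(2)])
    also have "\<dots> = (if e = e' then 1 else 0)" using QP pj pj' by auto
    finally show "(\<Sum>x\<in>E. \<phi> e x * \<psi> x e') = (if e = e' then 1 else 0)" .
  qed
  have j: "\<forall>e\<in>E. \<forall>e'\<in>E. (\<Sum>x\<in>E. \<psi> e x * \<phi> x e') = (if e = e' then 1 else 0)"
  proof (intro ballI)
    fix e e' assume e: "e \<in> E" and e': "e' \<in> E"
    obtain p j where pj: "e = (p,j)" "p < m" "j < n" using e unfolding E_def by auto
    obtain p' j' where pj': "e' = (p',j')" "p' < m" "j' < n" using e' unfolding E_def by auto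
    have "(\<Sum>x\<in>E. \<psi> e x * \<phi> x e') = (\<Sum>a\<in>{0..<m}. \<Sum>b\<in>{0..<n}. \<psi> (p,j) (a,b) * \<phi> (a,b) (p',j'))"
      unfolding E_def sum_E pj(1) pj'(1) ..
    also have "\<dots> = (\<Sum>a\<in>{0..<m}. if a = p then (\<lambda>a. (if p = p' then (\<Sum>b\<in>{0..<n}. P j b * Q b j') else 0)) a else 0)"
      unfolding \<phi>_def \<psi>_def using pj pj' by (intro sum.cong refl, auto intro!: sum.cong)
    also have "\<dots> = (if p = p' then (\<Sum>b\<in>{0..<n}. P j b * Q b j') else 0)"
      by (rule sum_delta_nat[OF pj(2)])
    also have "\<dots> = (if e = e' then 1 else 0)" using PQ pj pj' by auto
    finally show "(\<Sum>x\<in>E. \<psi> e x * \<phi> x e') = (if e = e' then 1 else 0)" .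
  qed
  have c: "\<forall>al. \<forall>e2\<in>E. \<forall>e1\<in>E. (\<Sum>x\<in>E. gact B D n al e2 x * \<phi> x e1) = (\<Sum>y\<in>E. \<phi> e2 y * gact B C n al y e1)"
  proof (intro allI ballI)
    fix al e2 e1 assume e2: "e2 \<in> E" and e1: "e1 \<in> E"
    obtain p2 j2 where pj2: "e2 = (p2,j2)" "p2 < m" "j2 < n" using e2 unfolding E_def by auto
    obtain p1 j1 where pj1: "e1 = (p1,j1)" "p1 < m" "j1 < n" using e1 unfolding E_def by auto
    define drc where "drc = (B!p1 = Dir al \<and> p2 = Suc p1 mod m)"
    define ivc where "ivc = (B!p2 = Inv al \<and> p1 = Suc p2 mod m)"
    have "(\<Sum>x\<in>E. gact B D n al e2 x * \<phi> x e1)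
        = (\<Sum>a\<in>{0..<m}. \<Sum>b\<in>{0..<n}. gact B D n al (p2,j2) (a,b) * \<phi> (a,b) (p1,j1))"
      unfolding E_def sum_E pj2(1) pj1(1) ..
    also have "\<dots> = (\<Sum>a\<in>{0..<m}. if a = p1 then (\<lambda>a. (\<Sum>b\<in>{0..<n}.
         ((if drc then gblk D p1 j2 b else 0) + (if ivc then gblk D p2 j2 b else 0)) * Q b j1)) a else 0)"
      unfolding \<phi>_def gact_def drc_def ivc_def m_def[symmetric] using pj2 pj1
      by (intro sum.cong refl, auto intro!: sum.cong)
    also have "\<dots> = (\<Sum>b\<in>{0..<n}. ((if drc then gblk D p1 j2 b else 0) + (if ivc then gblk D p2 j2 b else 0)) * Q b j1)"
      by (rule sum_delta_nat[OF pj1(2)])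
    also have "\<dots> = (if drc then (\<Sum>b\<in>{0..<n}. gblk D p1 j2 b * Q b j1) else 0)
                   + (if ivc then (\<Sum>b\<in>{0..<n}. gblk D p2 j2 b * Q b j1) else 0)"
      by (simp add: distrib_right sum.distrib)
    also have "\<dots> = (if drc then (\<Sum>b\<in>{0..<n}. Q j2 b * gblk C p1 b j1) else 0)
                   + (if ivc then (\<Sum>b\<in>{0..<n}. Q j2 b * gblk C p2 b j1) else 0)"
      using gblk_comm[OF DQ pj2(3) pj1(3)] by simp
    also have "\<dots> = (\<Sum>b\<in>{0..<n}. Q j2 b * ((if drc then gblk C p1 b j1 else 0) + (if ivc then gblk C p2 b j1 else 0)))"
      by (simp add: distrib_left sum.distrib)
    also have "\<dots> = (\<Sum>a\<in>{0..<m}. if a = p2 then (\<lambda>a. (\<Sum>b\<in>{0..<n}.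
         Q j2 b * ((if drc then gblk C p1 b j1 else 0) + (if ivc then gblk C p2 b j1 else 0)))) a else 0)"
      by (rule sum_delta_nat[OF pj2(2), symmetric])
    also have "\<dots> = (\<Sum>a\<in>{0..<m}. \<Sum>b\<in>{0..<n}. \<phi> (p2,j2) (a,b) * gact B C n al (a,b) (p1,j1))"
      unfolding \<phi>_def gact_def drc_def ivc_def m_def[symmetric] using pj2 pj1
      by (intro sum.cong refl, auto intro!: sum.cong)
    also have "\<dots> = (\<Sum>y\<in>E. \<phi> e2 y * gact B C n al y e1)"
      unfolding E_def sum_E pj2(1) pj1(1) ..
    finally show "(\<Sum>x\<in>E. gact B D n al e2 x * \<phi> x e1) = (\<Sum>y\<in>E. \<phi> e2 y * gact B C n al y e1)" .
  qed
  show ?thesis unfolding rep_iso_def gbm_def prod.case E_def[symmetric] m_def[symmetric] vt_def[symmetric]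
    by (rule exI[of _ \<phi>], rule exI[of _ \<psi>], intro conjI s t i j c)
qed


definition gi :: "nat \<Rightarrow> nat \<Rightarrow> nat \<Rightarrow> nat \<Rightarrow> nat" where
  "gi m q p k = (if p = 0 then m * (Suc k mod q) else p + m * k)"

lemma Suc_mod_cases: "k < (q::nat) \<Longrightarrow> Suc k mod q = (if Suc k = q then 0 else Suc k)"
  by auto

lemma gi_lt: "0 < m \<Longrightarrow> 0 < q \<Longrightarrow> p < m \<Longrightarrow> k < q \<Longrightarrow> gi m q p k < q * m"
proof -
  assume m: "0 < m" and q: "0 < q" and p: "p < m" and k: "k < q"
  show ?thesis
  proof (cases "p = 0")
    case True
    have "Suc k mod q < q" using q by simp
    then have "m * (Suc k mod q) < m * q" using m by simp
    then show ?thesis using True by (simp add: gi_def mult.commute)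
  next
    case False
    have "p + m * k < m + m * k" using p by simp
    also have "\<dots> = m * Suc k" by simp
    also have "\<dots> \<le> m * q" using k by (intro mult_le_mono2) simp
    finally show ?thesis using False by (simp add: gi_def mult.commute)
  qed
qed

lemma gi_mod: "p < m \<Longrightarrow> gi m q p k mod m = p"
  by (simp add: gi_def)

lemma gi_inj: "0 < m \<Longrightarrow> p < m \<Longrightarrow> p' < m \<Longrightarrow> k < q \<Longrightarrow> k' < q \<Longrightarrow> gi m q p k = gi m q p' k'
   \<Longrightarrow> p = p' \<and> k = k'"
proof -
  assume m: "0 < m" and p: "p < m" and p': "p' < m" and k: "k < q" and k': "k' < q"
    and eq: "gi m q p k = gi m q p' k'"
  have pp: "p = p'" using gi_mod[OF p, of q k] gi_mod[OF p', of q k'] eq by simp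
  show ?thesis
  proof (cases "p = 0")
    case True
    then have "Suc k mod q = Suc k' mod q" using eq pp m by (simp add: gi_def)
    then have "k = k'" using k k' unfolding Suc_mod_cases[OF k] Suc_mod_cases[OF k'] by (auto split: if_splits)
    then show ?thesis using pp by simp
  next
    case False
    then have "m * k = m * k'" using eq pp by (simp add: gi_def)
    then show ?thesis using pp m by simp
  qed
qed

lemma gi_Suc: "0 < m \<Longrightarrow> 0 < q \<Longrightarrow> p < m \<Longrightarrow> k < q \<Longrightarrow>
  Suc (gi m q p k) mod (q * m) = gi m q (Suc p mod m) (if p = 0 then Suc k mod q else k)"
proof -
  assume m: "0 < m" and q: "0 < q" and p: "p < m" and k: "k < q"
  show ?thesis
  proof (cases "p = 0")
    case p0: True
    show ?thesis
    proof (cases "m = 1")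
      case True
      then show ?thesis using p0 by (simp add: gi_def mod_Suc_eq)
    next
      case False
      then have m2: "m \<ge> 2" using m by simp
      define c where "c = Suc k mod q"
      have c: "c < q" unfolding c_def using q by simp
      then have "c + 1 \<le> q" by simp
      then have "m * (c + 1) \<le> m * q" by (intro mult_le_mono2)
      then have "Suc (m * c) < q * m" using m2 by (simp add: algebra_simps)
      then have "Suc (m * c) mod (q * m) = Suc (m * c)" by simp
      moreover have "Suc 0 mod m = 1" using m2 by simp
      ultimately show ?thesis using p0 by (simp add: gi_def c_def)
    qed
  next
    case pn0: False
    show ?thesis
    proof (cases "Suc p < m")
      case True
      have "Suc p + m * k < m + m * k" using True by simp
      also have "\<dots> = m * Suc k" by simp
      also have "\<dots> \<le> m * q" using k by (intro mult_le_mono2) simp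
      finally have "Suc (p + m * k) < q * m" by (simp add: mult.commute)
      then show ?thesis using pn0 True by (simp add: gi_def)
    next
      case False
      then have sp: "Suc p = m" using p by simp
      have "Suc (p + m * k) = m * Suc k" using sp by simp
      have "(m * Suc k) mod (m * q) = m * (Suc k mod q)" by (metis mult_mod_right)
      moreover have "Suc (p + m * k) mod (q * m) = (m * Suc k) mod (m * q)"
        by (simp only: \<open>Suc (p + m * k) = m * Suc k\<close> mult.commute[of q m])
      ultimately have "Suc (p + m * k) mod (q * m) = m * (Suc k mod q)" by simp
      then show ?thesis using pn0 sp by (simp add: gi_def)
    qed
  qed
qed

lemma gi_zero: "0 < m \<Longrightarrow> gi m q p k = 0 \<longleftrightarrow> p = 0 \<and> Suc k mod q = 0"
  by (simp add: gi_def)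

lemma concat_replicate_nth: "P < q * length B \<Longrightarrow> concat (replicate q B) ! P = B ! (P mod length B)"
proof (induction q arbitrary: P)
  case 0
  then show ?case by simp
next
  case (Suc q)
  show ?case
  proof (cases "P < length B")
    case True
    then show ?thesis by (simp add: nth_append)
  next
    case False
    then have "P - length B < q * length B" using Suc.prems by simp
    then have "concat (replicate q B) ! (P - length B) = B ! ((P - length B) mod length B)" by (rule Suc.IH)
    moreover have "(P - length B) mod length B = P mod length B" using False by (simp add: le_mod_geq)
    ultimately show ?thesis using False by (simp add: nth_append)
  qed
qed


definition Cd :: "'k::field \<Rightarrow> nat \<Rightarrow> nat \<Rightarrow> nat \<Rightarrow> 'k" where
  "Cd lam q k' k = (if k' = Suc k mod q then (if k' = 0 then lam else 1) else 0)"

definition Cq :: "'a letter list \<Rightarrow> 'k::field \<Rightarrow> nat \<Rightarrow> nat \<Rightarrow> nat \<Rightarrow> 'k" where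
  "Cq B lam q = (if (\<exists>a. B!0 = Dir a) then Cd lam q else (\<lambda>k' k. Cd lam q k k'))"

lemma length_concat_replicate: "length (concat (replicate q B)) = q * length B"
  by (induct q, auto)

lemma power_iso:
  fixes lam :: "'k::field"
  assumes B: "B \<noteq> []" and q: "0 < q"
  shows "rep_iso (gbm s t (concat (replicate q B)) (jordan lam) 1) (gbm s t B (Cq B lam q) q)"
proof -
  define m where "m = length B"
  have m: "0 < m" using B unfolding m_def by simp
  define Bq where "Bq = concat (replicate q B)"
  have lenBq: "length Bq = q * m" unfolding Bq_def m_def by (rule length_concat_replicate)
  define EN where "EN = {(p,j). p < m \<and> j < q}"
  define EM where "EM = {(P,j). P < length Bq \<and> j < (1::nat)}"
  define g where "g = (\<lambda>(p,k). (gi m q p k, 0::nat))"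
  have EN_eq: "EN = {0..<m} \<times> {0..<q}" unfolding EN_def by auto
  have EM_eq: "EM = {0..<q*m} \<times> {0}" unfolding EM_def lenBq by auto
  have inj: "inj_on g EN"
  proof (rule inj_onI)
    fix x y assume x: "x \<in> EN" and y: "y \<in> EN" and gxy: "g x = g y"
    obtain p k where xx: "x = (p,k)" "p < m" "k < q" using x unfolding EN_def by auto
    obtain p' k' where yy: "y = (p',k')" "p' < m" "k' < q" using y unfolding EN_def by auto
    have "gi m q p k = gi m q p' k'" using gxy unfolding xx(1) yy(1) g_def by simp
    then have "p = p' \<and> k = k'" by (rule gi_inj[OF m xx(2) yy(2) xx(3) yy(3)])
    then show "x = y" unfolding xx(1) yy(1) by simp
  qed
  have sub: "g ` EN \<subseteq> EM"
  proof
    fix y assume "y \<in> g ` EN"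
    then obtain p k where "y = g (p,k)" "p < m" "k < q" unfolding EN_def by auto
    then show "y \<in> EM" unfolding g_def EM_def lenBq using gi_lt[OF m q, of p k] by simp
  qed
  have "card (g ` EN) = card EN" by (rule card_image[OF inj])
  also have "\<dots> = card EM" unfolding EN_eq EM_eq by (simp add: card_cartesian_product)
  finally have "card (g ` EN) = card EM" .
  then have img: "g ` EN = EM" using sub by (intro card_subset_eq, auto simp: EM_eq)
  have bij: "bij_betw g EN EM" unfolding bij_betw_def using inj img by auto
  have finEM: "finite EM" unfolding EM_eq by simp
  have Bqnth: "\<And>p k. p < m \<Longrightarrow> k < q \<Longrightarrow> Bq ! gi m q p k = B ! p"
    unfolding Bq_def using concat_replicate_nth gi_lt[OF m q] gi_mod unfolding m_def
    by (metis m_def)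
  show ?thesis
    unfolding gbm_def Bq_def[symmetric] m_def[symmetric] EN_def[symmetric] EM_def[symmetric]
  proof (rule rep_iso_bij[OF bij finEM])
    fix e assume "e \<in> EN"
    then obtain p k where e: "e = (p,k)" "p < m" "k < q" unfolding EN_def by auto
    show "(\<lambda>(p, j). lsrc s t (Bq ! p)) (g e) = (\<lambda>(p, j). lsrc s t (B ! p)) e"
      using e Bqnth unfolding g_def by auto
  next
    fix al e e' assume "e \<in> EN" "e' \<in> EN"
    then obtain p k p' k' where e: "e = (p,k)" "p < m" "k < q" and e': "e' = (p',k')" "p' < m" "k' < q"
      unfolding EN_def by auto
    have lt: "gi m q p k < q * m" "gi m q p' k' < q * m" using gi_lt[OF m q] e e' by auto
    have sm: "Suc p mod m < m" "Suc p' mod m < m" using m by auto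
    have sk: "(if p = 0 then Suc k mod q else k) < q" "(if p' = 0 then Suc k' mod q else k') < q"
      using q e e' by auto
    have S1: "(gi m q p' k' = Suc (gi m q p k) mod (q*m)) \<longleftrightarrow> (p' = Suc p mod m \<and> k' = (if p = 0 then Suc k mod q else k))"
      unfolding gi_Suc[OF m q e(2) e(3)] using gi_inj[OF m e'(2) sm(1) e'(3) sk(1)] by auto
    have S2: "(gi m q p k = Suc (gi m q p' k') mod (q*m)) \<longleftrightarrow> (p = Suc p' mod m \<and> k = (if p' = 0 then Suc k' mod q else k'))"
      unfolding gi_Suc[OF m q e'(2) e'(3)] using gi_inj[OF m e(2) sm(2) e(3) sk(2)] by auto
    have Z1: "gi m q p k = 0 \<longleftrightarrow> p = 0 \<and> Suc k mod q = 0" by (rule gi_zero[OF m])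
    have Z2: "gi m q p' k' = 0 \<longleftrightarrow> p' = 0 \<and> Suc k' mod q = 0" by (rule gi_zero[OF m])
    have jb: "\<And>P. gblk (jordan lam) P 0 0 = (if P = 0 then lam else 1)" by (simp add: gblk_def jordan_def)
    have dir: "(if B!p = Dir al \<and> p' = Suc p mod m then gblk (Cq B lam q) p k' k else 0)
      = (if Bq ! gi m q p k = Dir al \<and> gi m q p' k' = Suc (gi m q p k) mod (q*m)
           then gblk (jordan lam) (gi m q p k) 0 0 else 0)"
      unfolding S1 Z1 jb Bqnth[OF e(2) e(3)]
      by (cases "p = 0", auto simp: gblk_def Cq_def Cd_def)
    have inv: "(if B!p' = Inv al \<and> p = Suc p' mod m then gblk (Cq B lam q) p' k' k else 0)
      = (if Bq ! gi m q p' k' = Inv al \<and> gi m q p k = Suc (gi m q p' k') mod (q*m)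
           then gblk (jordan lam) (gi m q p' k') 0 0 else 0)"
      unfolding S2 Z2 jb Bqnth[OF e'(2) e'(3)]
      by (cases "p' = 0", auto simp: gblk_def Cq_def Cd_def)
    show "gact B (Cq B lam q) q al e' e = gact Bq (jordan lam) 1 al (g e') (g e)"
      unfolding gact_def g_def e(1) e'(1) prod.case m_def[symmetric] lenBq
      using e e' lt dir inv by simp
  qed
qed

lemma sigma_inj: "i < (q::nat) \<Longrightarrow> j < q \<Longrightarrow> Suc i mod q = Suc j mod q \<Longrightarrow> i = j"
  by (metis Suc_mod_cases Suc_inject nat.distinct(1))

lemma sigma_bij: "0 < (q::nat) \<Longrightarrow> bij_betw (\<lambda>a. Suc a mod q) {0..<q} {0..<q}"
proof -
  assume q: "0 < q"
  have inj: "inj_on (\<lambda>a. Suc a mod q) {0..<q}" by (rule inj_onI, auto intro: sigma_inj)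
  have sub: "(\<lambda>a. Suc a mod q) ` {0..<q} \<subseteq> {0..<q}" using q by auto
  have "(\<lambda>a. Suc a mod q) ` {0..<q} = {0..<q}" by (rule endo_inj_surj[OF _ sub inj], simp)
  then show ?thesis using inj unfolding bij_betw_def by auto
qed

lemma Cq_inv:
  fixes lam :: "'k::field"
  assumes lam: "lam \<noteq> 0" and q: "0 < q"
  shows "\<exists>Ci. \<forall>i<q. \<forall>j<q. (\<Sum>a\<in>{0..<q}. Cq B lam q i a * Ci a j) = (if i = j then 1 else 0)"
proof -
  define c where "c = (\<lambda>i::nat. if i = 0 then lam else 1)"
  have c0: "\<And>i. c i \<noteq> 0" unfolding c_def using lam by auto
  have Cdc: "\<And>i a. Cd lam q i a = (if i = Suc a mod q then c i else 0)" unfolding Cd_def c_def by auto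
  show ?thesis
  proof (cases "\<exists>a. B!0 = Dir a")
    case True
    define Ci where "Ci = (\<lambda>a j. if j = Suc a mod q then 1 / c j else (0::'k))"
    show ?thesis
    proof (rule exI[of _ Ci], intro allI impI)
      fix i j assume i: "i < q" and j: "j < q"
      have "(\<Sum>a\<in>{0..<q}. Cq B lam q i a * Ci a j)
          = (\<Sum>a\<in>{0..<q}. (\<lambda>b. if b = i then (if b = j then c i / c j else 0) else 0) (Suc a mod q))"
        unfolding Cq_def using True by (intro sum.cong refl, auto simp: Cdc Ci_def)
      also have "\<dots> = (\<Sum>b\<in>{0..<q}. if b = i then (if b = j then c i / c j else 0) else 0)"
        by (rule sum.reindex_bij_betw[OF sigma_bij[OF q]])
      also have "\<dots> = (if i = j then 1 else 0)" using i c0 by (simp add: sum.delta)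
      finally show "(\<Sum>a\<in>{0..<q}. Cq B lam q i a * Ci a j) = (if i = j then 1 else 0)" .
    qed
  next
    case False
    define Ci where "Ci = (\<lambda>a j. if a = Suc j mod q then 1 / c a else (0::'k))"
    show ?thesis
    proof (rule exI[of _ Ci], intro allI impI)
      fix i j assume i: "i < q" and j: "j < q"
      have "(\<Sum>a\<in>{0..<q}. Cq B lam q i a * Ci a j)
          = (\<Sum>a\<in>{0..<q}. if a = Suc i mod q then (if Suc i mod q = Suc j mod q then 1 else 0) else 0)"
        unfolding Cq_def using False c0 by (intro sum.cong refl, auto simp: Cdc Ci_def)
      also have "\<dots> = (if Suc i mod q = Suc j mod q then 1 else 0)" using q by (simp add: sum.delta)
      also have "\<dots> = (if i = j then 1 else 0)" using sigma_inj[OF i j] by auto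
      finally show "(\<Sum>a\<in>{0..<q}. Cq B lam q i a * Ci a j) = (if i = j then 1 else 0)" .
    qed
  qed
qed


definition off :: "(nat \<times> 'k) list \<Rightarrow> nat \<Rightarrow> nat" where
  "off ns k = sum_list (map fst (take k ns))"

lemma off_Nil[simp]: "off [] k = 0" by (simp add: off_def)
lemma off_0[simp]: "off ns 0 = 0" by (simp add: off_def)
lemma off_Cons_Suc[simp]: "off (x # xs) (Suc k) = fst x + off xs k" by (simp add: off_def)

lemma off_bound: "k < length ns \<Longrightarrow> j < fst (ns ! k) \<Longrightarrow> off ns k + j < sum_list (map fst ns)"
proof (induction ns arbitrary: k)
  case Nil then show ?case by simp
next
  case (Cons x xs)
  then show ?case by (cases k, auto)
qed

lemma off_inj: "k < length ns \<Longrightarrow> j < fst (ns ! k) \<Longrightarrow> k' < length ns \<Longrightarrow> j' < fst (ns ! k') \<Longrightarrow>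
   off ns k + j = off ns k' + j' \<Longrightarrow> k = k' \<and> j = j'"
proof (induction ns arbitrary: k k')
  case Nil then show ?case by simp
next
  case (Cons x xs)
  show ?case
  proof (cases k)
    case 0
    then show ?thesis using Cons.prems by (cases k', auto)
  next
    case (Suc k1)
    show ?thesis
    proof (cases k')
      case 0
      then show ?thesis using Cons.prems Suc by auto
    next
      case (Suc k1')
      then show ?thesis using Cons.prems \<open>k = Suc k1\<close> Cons.IH[of k1 k1'] by auto
    qed
  qed
qed

lemma off_surj: "J < sum_list (map fst ns) \<Longrightarrow> \<exists>k j. k < length ns \<and> j < fst (ns ! k) \<and> J = off ns k + j"
proof (induction ns arbitrary: J)
  case Nil then show ?case by simp
next
  case (Cons x xs)
  show ?case
  proof (cases "J < fst x")
    case True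
    then show ?thesis by (intro exI[of _ 0] exI[of _ J], auto)
  next
    case False
    then have "J - fst x < sum_list (map fst xs)" using Cons.prems by auto
    then obtain k j where "k < length xs" "j < fst (xs ! k)" "J - fst x = off xs k + j" using Cons.IH by blast
    then show ?thesis using False by (intro exI[of _ "Suc k"] exI[of _ j], auto)
  qed
qed

lemma jordan_matrix_Cons: "jordan_matrix ((n,a) # xs) =
  four_block_mat (jordan_block n a) (0\<^sub>m n (sum_list (map fst xs))) (0\<^sub>m (sum_list (map fst xs)) n) (jordan_matrix xs)"
  unfolding jordan_matrix_def by (simp add: Let_def jordan_matrix_def[symmetric])

lemma jordan_matrix_off:
  "k < length ns \<Longrightarrow> l < length ns \<Longrightarrow> i < fst (ns ! k) \<Longrightarrow> j < fst (ns ! l) \<Longrightarrow>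
   jordan_matrix ns $$ (off ns k + i, off ns l + j) = (if k = l then jordan (snd (ns ! k)) i j else 0)"
proof (induction ns arbitrary: k l)
  case Nil then show ?case by simp
next
  case (Cons x xs)
  obtain n a where x: "x = (n, a)" by (cases x, auto)
  let ?R = "sum_list (map fst xs)"
  have dims: "dim_row (jordan_matrix xs) = ?R" "dim_col (jordan_matrix xs) = ?R" by auto
  have bnd: "\<And>k i. k < length xs \<Longrightarrow> i < fst (xs ! k) \<Longrightarrow> off xs k + i < ?R" by (rule off_bound)
  show ?case
  proof (cases k)
    case 0
    show ?thesis
    proof (cases l)
      case 0
      then show ?thesis using \<open>k = 0\<close> Cons.prems x by (simp add: jordan_matrix_Cons jordan_def)
    next
      case (Suc l1)
      have "off xs l1 + j < ?R" using bnd Cons.prems Suc by auto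
      then show ?thesis using \<open>k = 0\<close> Suc Cons.prems x by (simp add: jordan_matrix_Cons)
    qed
  next
    case (Suc k1)
    have bk: "off xs k1 + i < ?R" using bnd Cons.prems Suc by auto
    show ?thesis
    proof (cases l)
      case 0
      then show ?thesis using Suc bk Cons.prems x by (simp add: jordan_matrix_Cons)
    next
      case (Suc l1)
      have bl: "off xs l1 + j < ?R" using bnd Cons.prems Suc by auto
      have "jordan_matrix (x # xs) $$ (off (x # xs) k + i, off (x # xs) l + j)
          = jordan_matrix xs $$ (off xs k1 + i, off xs l1 + j)"
        using \<open>k = Suc k1\<close> Suc bk bl x by (simp add: jordan_matrix_Cons)
      also have "\<dots> = (if k1 = l1 then jordan (snd (xs ! k1)) i j else 0)"
        by (rule Cons.IH, insert Cons.prems \<open>k = Suc k1\<close> Suc, auto)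
      finally show ?thesis using \<open>k = Suc k1\<close> Suc by simp
    qed
  qed
qed

lemma jordan_dsum_iso:
  fixes ns :: "(nat \<times> 'k::field) list"
  shows "rep_iso (gbm s t B (\<lambda>i j. jordan_matrix ns $$ (i,j)) (sum_list (map fst ns)))
     (dsum (map (\<lambda>(lam, qk). band_module s t B lam qk) (map (\<lambda>(n,a). (a,n)) ns)))"
proof -
  define m where "m = length B"
  define N where "N = sum_list (map fst ns)"
  define J where "J = (\<lambda>i j. jordan_matrix ns $$ (i,j))"
  define Ms where "Ms = map (\<lambda>(lam, qk). band_module s t B lam qk) (map (\<lambda>(n,a). (a,n)) ns)"
  have lenMs: "length Ms = length ns" unfolding Ms_def by simp
  have Msk: "\<And>k. k < length ns \<Longrightarrow> Ms ! k = gbm s t B (jordan (snd (ns!k))) (fst (ns!k))"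
    unfolding Ms_def by (simp add: band_module_gbm case_prod_beta)
  define E1 where "E1 = {(p,j). p < m \<and> j < N}"
  define E2 where "E2 = {(k, e). k < length Ms \<and> e \<in> fst (Ms!k)}"
  have E2_eq: "E2 = {(k, (p, j)). k < length ns \<and> p < m \<and> j < fst (ns!k)}"
    unfolding E2_def lenMs using Msk by (auto simp: gbm_def m_def)
  define g where "g = (\<lambda>(k::nat, (p::nat, j::nat)). (p, off ns k + j))"
  have inj: "inj_on g E2"
  proof (rule inj_onI)
    fix x y assume x: "x \<in> E2" and y: "y \<in> E2" and gxy: "g x = g y"
    obtain k p j where "x = (k,(p,j))" "k < length ns" "j < fst (ns!k)" using x unfolding E2_eq by auto
    moreover obtain k' p' j' where "y = (k',(p',j'))" "k' < length ns" "j' < fst (ns!k')" using y unfolding E2_eq by auto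
    ultimately show "x = y" using gxy off_inj[of k ns j k' j'] unfolding g_def by auto
  qed
  have img: "g ` E2 = E1"
  proof
    show "g ` E2 \<subseteq> E1" unfolding E2_eq E1_def g_def N_def using off_bound by fastforce
  next
    show "E1 \<subseteq> g ` E2"
    proof
      fix x assume "x \<in> E1"
      then obtain p J' where x: "x = (p, J')" "p < m" "J' < N" unfolding E1_def by auto
      then obtain k j where "k < length ns" "j < fst (ns ! k)" "J' = off ns k + j"
        using off_surj unfolding N_def by blast
      then show "x \<in> g ` E2" unfolding E2_eq g_def using x by (auto intro!: image_eqI[where x="(k,(p,j))"])
    qed
  qed
  have bij: "bij_betw g E2 E1" unfolding bij_betw_def using inj img by auto
  have finE1: "finite E1"
  proof -
    have "E1 = {0..<m} \<times> {0..<N}" unfolding E1_def by auto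
    then show ?thesis by simp
  qed
  have gb: "gblk J p0 (off ns k + j') (off ns k + j) = gblk (jordan (snd (ns!k))) p0 j' j"
    if "k < length ns" "j < fst (ns!k)" "j' < fst (ns!k)" for k p0 j' j
    using that jordan_matrix_off[of k ns k j' j] unfolding gblk_def J_def by simp
  have gb0: "gblk J p0 (off ns k' + j') (off ns k + j) = 0"
    if "k < length ns" "j < fst (ns!k)" "k' < length ns" "j' < fst (ns!k')" "k \<noteq> k'" for k k' p0 j' j
  proof -
    have "jordan_matrix ns $$ (off ns k' + j', off ns k + j) = 0"
      using jordan_matrix_off[of k' ns k j' j] that by auto
    moreover have "off ns k' + j' \<noteq> off ns k + j" using off_inj[of k' ns j' k j] that by auto
    ultimately show ?thesis unfolding gblk_def J_def by simp
  qed
  show ?thesis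
    unfolding gbm_def dsum_def Ms_def[symmetric] m_def[symmetric] N_def[symmetric] J_def[symmetric]
      E1_def[symmetric] E2_def[symmetric]
  proof (rule rep_iso_bij[OF bij finE1])
    fix e assume "e \<in> E2"
    then obtain k p j where e: "e = (k,(p,j))" "k < length ns" "p < m" "j < fst (ns!k)" unfolding E2_eq by auto
    show "(\<lambda>(p, j). lsrc s t (B ! p)) (g e) = (\<lambda>(k, e). fst (snd (Ms ! k)) e) e"
      using e Msk unfolding g_def by (simp add: gbm_def)
  next
    fix al e e' assume "e \<in> E2" "e' \<in> E2"
    then obtain k p j k' p' j' where e: "e = (k,(p,j))" "k < length ns" "p < m" "j < fst (ns!k)"
      and e': "e' = (k',(p',j'))" "k' < length ns" "p' < m" "j' < fst (ns!k')" unfolding E2_eq by auto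
    have b1: "off ns k + j < N" "off ns k' + j' < N" unfolding N_def using off_bound e e' by auto
    show "(\<lambda>al (k', e') (k, e). if k = k' \<and> k < length Ms then snd (snd (Ms ! k)) al e' e else 0) al e' e
        = gact B J N al (g e') (g e)"
    proof (cases "k = k'")
      case True
      then have kk: "k' = k" by simp
      have j'k: "j' < fst (ns!k)" using e'(4) kk by simp
      have g1: "gblk J p (off ns k + j') (off ns k + j) = gblk (jordan (snd (ns!k))) p j' j"
        using gb[of k j j' p] e j'k by simp
      have g2: "gblk J p' (off ns k + j') (off ns k + j) = gblk (jordan (snd (ns!k))) p' j' j"
        using gb[of k j j' p'] e j'k by simp
      have b2: "off ns k + j' < N" using b1(2) kk by simp
      show ?thesis unfolding e(1) e'(1) g_def kk using e b1(1) b2 Msk[OF e(2)] e'(3) j'k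
        apply (simp add: lenMs gbm_def gact_def m_def split del: if_split)
        by (simp only: g1 g2)
    next
      case False
      then show ?thesis unfolding e(1) e'(1) g_def using e e' b1 gb0[OF e(2) e(4) e'(2) e'(4) False]
        by (simp add: lenMs gact_def m_def)
    qed
  qed
qed

lemma finite_fst_gbm: "finite (fst (gbm s t B C n))"
proof -
  have "fst (gbm s t B C n) = {0..<length B} \<times> {0..<n}" unfolding gbm_def by auto
  then show ?thesis by simp
qed

lemma finite_fst_point_rep: "finite (fst (point_rep s t (d :: 'v::finite \<Rightarrow> nat) x))"
proof -
  have "fst (point_rep s t d x) = Sigma UNIV (\<lambda>v. {..<d v})" unfolding point_rep_def by auto
  then show ?thesis by simp
qed

lemma finite_fst_dsum:
  assumes "\<And>k. k < length Ms \<Longrightarrow> finite (fst (Ms ! k))"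
  shows "finite (fst (dsum Ms))"
proof -
  have e: "fst (dsum Ms) = Sigma {..<length Ms} (\<lambda>k. fst (Ms ! k))" unfolding dsum_def by auto
  show ?thesis unfolding e by (intro finite_SigmaI) (auto intro: assms)
qed

theorem mainTheorem4:
  fixes s t :: "'a::finite \<Rightarrow> 'v::finite"
    and R :: "('a \<times> 'a) set"
    and B :: "'a letter list"
    and q :: nat
  assumes "alg_closed TYPE('k::field)"
    and "gentle s t R"
    and "minimal_band s t R B"
    and "q > 1"
  shows "(fam_power s t R (band_dimvec s t B q) B q :: ('a \<times> nat \<times> nat \<Rightarrow> 'k) set)
           \<subseteq> zariski_closure (fam_mult s t R (band_dimvec s t B q) B q)"
proof
  note alg = assms(1)
  define d where "d = band_dimvec s t B q"
  fix x :: "'a \<times> nat \<times> nat \<Rightarrow> 'k"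
  assume "x \<in> fam_power s t R (band_dimvec s t B q) B q"
  then obtain lam :: 'k where xm: "x \<in> mod_var s t R d" and lam: "lam \<noteq> 0"
    and iso0: "rep_iso (point_rep s t d x) (band_module s t (concat (replicate q B)) lam 1)"
    unfolding fam_power_def d_def by blast
  have B: "B \<noteq> []" using assms(3) unfolding minimal_band_def is_band_def by auto
  have q: "0 < q" using assms(4) by simp
  have iso1: "rep_iso (band_module s t (concat (replicate q B)) lam 1) (gbm s t B (Cq B lam q) q)"
    unfolding band_module_gbm by (rule power_iso[OF B q])
  obtain Ci where inv: "\<forall>i<q. \<forall>j<q. (\<Sum>a\<in>{0..<q}. Cq B lam q i a * Ci a j) = (if i = j then 1 else 0)"
    using Cq_inv[OF lam q, of B] by blast
  obtain ns P Q where nz: "\<forall>(n,a)\<in>set ns. n \<ge> 1 \<and> a \<noteq> 0" and sq: "sum_list (map fst ns) = q"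
    and PQ: "\<forall>i<q. \<forall>j<q. (\<Sum>a\<in>{0..<q}. P i a * Q a j) = (if i = j then 1 else 0)"
    and QP: "\<forall>i<q. \<forall>j<q. (\<Sum>a\<in>{0..<q}. Q i a * P a j) = (if i = j then 1 else 0)"
    and JQ: "\<forall>i<q. \<forall>j<q. (\<Sum>a\<in>{0..<q}. jordan_matrix ns $$ (i,a) * Q a j) = (\<Sum>a\<in>{0..<q}. Q i a * Cq B lam q a j)"
    using jnf_fun[OF alg inv] by blast
  have iso2: "rep_iso (gbm s t B (Cq B lam q) q) (gbm s t B (\<lambda>i j. jordan_matrix ns $$ (i,j)) q)"
    by (rule gbm_sim[OF PQ QP], use JQ in simp)
  define ps where "ps = map (\<lambda>(n,a). (a,n)) ns"
  define Ms where "Ms = map (\<lambda>(lam, qk). band_module s t B lam qk) ps"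
  have iso3: "rep_iso (gbm s t B (\<lambda>i j. jordan_matrix ns $$ (i,j)) q) (dsum Ms)"
    using jordan_dsum_iso[of s t B ns] unfolding sq Ms_def ps_def .
  have finMs: "finite (fst (dsum Ms))"
    by (rule finite_fst_dsum, simp add: Ms_def ps_def case_prod_beta band_module_gbm finite_fst_gbm)
  have fin_bm: "finite (fst (band_module s t (concat (replicate q B)) lam 1))"
    unfolding band_module_gbm by (rule finite_fst_gbm)
  have iso: "rep_iso (point_rep s t d x) (dsum Ms)"
  proof -
    have a: "rep_iso (point_rep s t d x) (gbm s t B (Cq B lam q) q)"
      by (rule rep_iso_trans[OF iso0 iso1 finite_fst_point_rep fin_bm finite_fst_gbm])
    have b: "rep_iso (point_rep s t d x) (gbm s t B (\<lambda>i j. jordan_matrix ns $$ (i,j)) q)"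
      by (rule rep_iso_trans[OF a iso2 finite_fst_point_rep finite_fst_gbm finite_fst_gbm])
    show ?thesis
      by (rule rep_iso_trans[OF b iso3 finite_fst_point_rep finite_fst_gbm finMs])
  qed
  have ps1: "\<forall>(lam, qk)\<in>set ps. lam \<noteq> 0 \<and> qk \<ge> 1" using nz unfolding ps_def by auto
  have ps2: "(\<Sum>(lam, qk)\<leftarrow>ps. qk) = q" unfolding ps_def sq[symmetric]
    by (induct ns, auto)
  have xin: "x \<in> fam_mult s t R d B q"
    unfolding fam_mult_def using xm ps1 ps2 iso unfolding Ms_def by blast
  show "x \<in> zariski_closure (fam_mult s t R (band_dimvec s t B q) B q)"
    using xin unfolding zariski_closure_def d_def by blast
qed

end
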